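(* Let $(V,m)$ be a discrete measure space, $(b,c)$ a graph over $(V,m)$, and let $Q$ with domain $D$ satisfy condition (C) with respect to $(b,c)$ (so $D\subseteq\widetilde F$). Then for $u\in D$ the following are equivalent: (i) $(\widetilde L+1)u=0$; (ii) $u$ is orthogonal to $D(Q^{(D)})$ with respect to $\langle\cdot,\cdot\rangle_Q$. Consequently, the Hilbert space $(D,\langle\cdot,\cdot\rangle_Q)$ is the orthogonal sum $D=D(Q^{(D)})\oplus\mathcal H^{(Q)}$, where $\mathcal H^{(Q)}=\{u\in D:(\widetilde L+1)u=0\}$.
   Context: $V$ is a finite or countably infinite set and $m:V\to(0,\infty)$; $(V,m)$ is a discrete measure space. $C(V)$ is the set of all functions $V\to\mathbb C$, $C_c(V)$ the finitely supported ones, and $\ell^2(V,m)$ carries $\langle u,v\rangle=\sum_x u(x)\overline{v(x)}m(x)$. A graph over $(V,m)$ is a pair $(b,c)$ with $c:V\to[0,\infty)$, $b:V\times V\to[0,\infty)$, $b(x,x)=0$, $b(x,y)=b(y,x)$, $\sum_y b(x,y)<\infty$. Let $\widetilde F=\{u\in C(V):\sum_y|b(x,y)u(y)|<\infty\ \forall x\}$ and $\widetilde L u(x)=\frac{1}{m(x)}\sum_y b(x,y)(u(x)-u(y))+\frac{c(x)}{m(x)}u(x)$ for $u\in\widetilde F$. $Q^{(N)}$ is the form on $\ell^2(V,m)$ with domain $D(Q^{(N)})=\{u\in\ell^2(V,m):\frac12\sum_{x,y}b(x,y)|u(x)-u(y)|^2+\sum_x c(x)|u(x)|^2<\infty\}$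 and $Q^{(N)}(u,v)=\frac12\sum_{x,y}b(x,y)(u(x)-u(y))\overline{(v(x)-v(y))}+\sum_x c(x)u(x)\overline{v(x)}$; it is non-negative, symmetric and closed. $Q^{(D)}$ is the closure of the restriction of $Q^{(N)}$ to $C_c(V)$. For a closed non-negative form $Q$, $\langle u,v\rangle_Q=Q(u,v)+\langle u,v\rangle$ on $D(Q)$. A symmetric form $Q$ on $\ell^2(V,m)$ with domain $D$ satisfies condition (C) w.r.t. $(b,c)$ if: (C0) $Q$ is non-negative and closed; (C1) $C_c(V)\subseteq D$; (C2) for all $u\in D$ and $v\in C_c(V)$ the sum $\sum_x u(x)\overline{\widetilde L v(x)}m(x)$ converges absolutely and equals $Q(u,v)$. *)

theory Defs
  imports "HOL-Analysis.Analysis"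
begin

text \<open>Discrete measure space: vertex type 'v of class countable (finite or countably
infinite), measure m with m x > 0. Functions V -> C are 'v \<Rightarrow> complex.\<close>

definition l2 :: "('v \<Rightarrow> real) \<Rightarrow> ('v \<Rightarrow> complex) set" where
  "l2 m = {u. (\<lambda>x. (cmod (u x))\<^sup>2 * m x) summable_on UNIV}"

definition ip :: "('v \<Rightarrow> real) \<Rightarrow> ('v \<Rightarrow> complex) \<Rightarrow> ('v \<Rightarrow> complex) \<Rightarrow> complex" where
  "ip m u v = (\<Sum>\<^sub>\<infinity>x. u x * cnj (v x) * complex_of_real (m x))"

definition Cc :: "('v \<Rightarrow> complex) set" where
  "Cc = {u. finite {x. u x \<noteq> 0}}"

definition is_graph :: "('v \<Rightarrow> 'v \<Rightarrow> real) \<Rightarrow> ('v \<Rightarrow> real) \<Rightarrow> bool" where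
  "is_graph b c \<longleftrightarrow> (\<forall>x. c x \<ge> 0) \<and> (\<forall>x y. b x y \<ge> 0) \<and> (\<forall>x. b x x = 0)
     \<and> (\<forall>x y. b x y = b y x) \<and> (\<forall>x. (\<lambda>y. b x y) summable_on UNIV)"

definition Ftilde :: "('v \<Rightarrow> 'v \<Rightarrow> real) \<Rightarrow> ('v \<Rightarrow> complex) set" where
  "Ftilde b = {u. \<forall>x. (\<lambda>y. cmod (complex_of_real (b x y) * u y)) summable_on UNIV}"

definition Ltilde :: "('v \<Rightarrow> 'v \<Rightarrow> real) \<Rightarrow> ('v \<Rightarrow> real) \<Rightarrow> ('v \<Rightarrow> real)
    \<Rightarrow> ('v \<Rightarrow> complex) \<Rightarrow> 'v \<Rightarrow> complex" where
  "Ltilde b c m u x =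
     (\<Sum>\<^sub>\<infinity>y. complex_of_real (b x y) * (u x - u y)) / complex_of_real (m x)
     + complex_of_real (c x / m x) * u x"

definition qnorm :: "('v \<Rightarrow> real) \<Rightarrow> (('v \<Rightarrow> complex) \<Rightarrow> ('v \<Rightarrow> complex) \<Rightarrow> complex)
    \<Rightarrow> ('v \<Rightarrow> complex) \<Rightarrow> real" where
  "qnorm m Q u = sqrt (Re (Q u u + ip m u u))"

definition is_sym_form :: "('v \<Rightarrow> real) \<Rightarrow> ('v \<Rightarrow> complex) set
    \<Rightarrow> (('v \<Rightarrow> complex) \<Rightarrow> ('v \<Rightarrow> complex) \<Rightarrow> complex) \<Rightarrow> bool" where
  "is_sym_form m D Q \<longleftrightarrow> D \<subseteq> l2 m \<and> (\<lambda>x. 0) \<in> D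
     \<and> (\<forall>u\<in>D. \<forall>v\<in>D. (\<lambda>x. u x + v x) \<in> D)
     \<and> (\<forall>a. \<forall>u\<in>D. (\<lambda>x. a * u x) \<in> D)
     \<and> (\<forall>u\<in>D. \<forall>v\<in>D. \<forall>w\<in>D. Q (\<lambda>x. u x + v x) w = Q u w + Q v w)
     \<and> (\<forall>a. \<forall>u\<in>D. \<forall>w\<in>D. Q (\<lambda>x. a * u x) w = a * Q u w)
     \<and> (\<forall>u\<in>D. \<forall>v\<in>D. Q u v = cnj (Q v u))"

definition nonneg_form :: "('v \<Rightarrow> complex) set
    \<Rightarrow> (('v \<Rightarrow> complex) \<Rightarrow> ('v \<Rightarrow> complex) \<Rightarrow> complex) \<Rightarrow> bool" where
  "nonneg_form D Q \<longleftrightarrow> (\<forall>u\<in>D. 0 \<le> Re (Q u u))"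

definition closed_form :: "('v \<Rightarrow> real) \<Rightarrow> ('v \<Rightarrow> complex) set
    \<Rightarrow> (('v \<Rightarrow> complex) \<Rightarrow> ('v \<Rightarrow> complex) \<Rightarrow> complex) \<Rightarrow> bool" where
  "closed_form m D Q \<longleftrightarrow> (\<forall>s. (\<forall>n. s n \<in> D) \<and>
       (\<forall>e>0. \<exists>N. \<forall>n\<ge>N. \<forall>k\<ge>N. qnorm m Q (\<lambda>x. s n x - s k x) < e)
     \<longrightarrow> (\<exists>u\<in>D. (\<lambda>n. qnorm m Q (\<lambda>x. s n x - u x)) \<longlonglongrightarrow> 0))"

definition condC :: "('v \<Rightarrow> 'v \<Rightarrow> real) \<Rightarrow> ('v \<Rightarrow> real) \<Rightarrow> ('v \<Rightarrow> real)
    \<Rightarrow> ('v \<Rightarrow> complex) set \<Rightarrow> (('v \<Rightarrow> complex) \<Rightarrow> ('v \<Rightarrow> complex) \<Rightarrow> complex) \<Rightarrow> bool" where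
  "condC b c m D Q \<longleftrightarrow> is_sym_form m D Q \<and> nonneg_form D Q \<and> closed_form m D Q
     \<and> Cc \<subseteq> D
     \<and> (\<forall>u\<in>D. \<forall>v\<in>Cc.
          (\<lambda>x. cmod (u x * cnj (Ltilde b c m v x) * complex_of_real (m x))) summable_on UNIV
          \<and> (\<Sum>\<^sub>\<infinity>x. u x * cnj (Ltilde b c m v x) * complex_of_real (m x)) = Q u v)"

definition DN :: "('v \<Rightarrow> 'v \<Rightarrow> real) \<Rightarrow> ('v \<Rightarrow> real) \<Rightarrow> ('v \<Rightarrow> real) \<Rightarrow> ('v \<Rightarrow> complex) set" where
  "DN b c m = {u \<in> l2 m. (\<lambda>(x,y). b x y * (cmod (u x - u y))\<^sup>2) summable_on UNIV
                        \<and> (\<lambda>x. c x * (cmod (u x))\<^sup>2) summable_on UNIV}"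

definition QN :: "('v \<Rightarrow> 'v \<Rightarrow> real) \<Rightarrow> ('v \<Rightarrow> real)
    \<Rightarrow> ('v \<Rightarrow> complex) \<Rightarrow> ('v \<Rightarrow> complex) \<Rightarrow> complex" where
  "QN b c u v = (1/2) * (\<Sum>\<^sub>\<infinity>(x,y). complex_of_real (b x y) * (u x - u y) * cnj (v x - v y))
               + (\<Sum>\<^sub>\<infinity>x. complex_of_real (c x) * u x * cnj (v x))"

text \<open>Domain of Q^(D): closure of Cc in D(Q^(N)) w.r.t. the Q^(N)-form norm
  (the domain of the closure of Q^(N) restricted to Cc).\<close>
definition DQD :: "('v \<Rightarrow> 'v \<Rightarrow> real) \<Rightarrow> ('v \<Rightarrow> real) \<Rightarrow> ('v \<Rightarrow> real) \<Rightarrow> ('v \<Rightarrow> complex) set" where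
  "DQD b c m = {u \<in> DN b c m. \<exists>phi. (\<forall>n. phi n \<in> Cc) \<and>
        (\<lambda>n. qnorm m (QN b c) (\<lambda>x. phi n x - u x)) \<longlonglongrightarrow> 0}"

definition qip :: "('v \<Rightarrow> real) \<Rightarrow> (('v \<Rightarrow> complex) \<Rightarrow> ('v \<Rightarrow> complex) \<Rightarrow> complex)
    \<Rightarrow> ('v \<Rightarrow> complex) \<Rightarrow> ('v \<Rightarrow> complex) \<Rightarrow> complex" where
  "qip m Q u v = Q u v + ip m u v"

definition Hsp :: "('v \<Rightarrow> 'v \<Rightarrow> real) \<Rightarrow> ('v \<Rightarrow> real) \<Rightarrow> ('v \<Rightarrow> real)
    \<Rightarrow> ('v \<Rightarrow> complex) set \<Rightarrow> ('v \<Rightarrow> complex) set" where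
  "Hsp b c m D = {u \<in> D. \<forall>x. Ltilde b c m u x + u x = 0}"

end

theory Submission
  imports Defs
begin


definition ws :: "('i \<Rightarrow> real) \<Rightarrow> ('i \<Rightarrow> complex) set" where
  "ws w = {p. (\<lambda>i. w i * (cmod (p i))\<^sup>2) summable_on UNIV}"
definition EE :: "('i \<Rightarrow> real) \<Rightarrow> ('i \<Rightarrow> complex) \<Rightarrow> real" where
  "EE w p = (\<Sum>\<^sub>\<infinity>i. w i * (cmod (p i))\<^sup>2)"
definition wf :: "('i \<Rightarrow> real) \<Rightarrow> ('i \<Rightarrow> complex) \<Rightarrow> ('i \<Rightarrow> complex) \<Rightarrow> complex" where
  "wf w p q = (\<Sum>\<^sub>\<infinity>i. complex_of_real (w i) * p i * cnj (q i))"

lemma infsum_of_real':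
  "f summable_on A \<Longrightarrow> (\<Sum>\<^sub>\<infinity>x\<in>A. complex_of_real (f x)) = complex_of_real (\<Sum>\<^sub>\<infinity>x\<in>A. f x)"
  by (intro infsumI has_sum_of_real has_sum_infsum)

lemma ws_prod_summable:
  assumes w: "\<And>i. w i \<ge> 0" and p: "p \<in> ws w" and q: "q \<in> ws w"
  shows "(\<lambda>i. complex_of_real (w i) * p i * cnj (q i)) summable_on UNIV"
proof -
  have "(\<lambda>i. (w i * (cmod (p i))\<^sup>2 + w i * (cmod (q i))\<^sup>2) * (1/2)) summable_on UNIV"
    using p q unfolding ws_def
    by (intro summable_on_cmult_left summable_on_add) auto
  then have s: "(\<lambda>i. (w i * (cmod (p i))\<^sup>2 + w i * (cmod (q i))\<^sup>2) / 2) summable_on UNIV"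
    by simp
  have "(\<lambda>i. norm (complex_of_real (w i) * p i * cnj (q i))) summable_on UNIV"
  proof (rule Infinite_Sum.abs_summable_on_comparison_test'[OF s])
    fix i
    have "2 * (cmod (p i) * cmod (q i)) \<le> (cmod (p i))\<^sup>2 + (cmod (q i))\<^sup>2"
      using sum_squares_bound[of "cmod (p i)" "cmod (q i)"] by (simp add: mult.assoc)
    then have "w i * (2 * (cmod (p i) * cmod (q i))) \<le> w i * ((cmod (p i))\<^sup>2 + (cmod (q i))\<^sup>2)"
      using w[of i] by (rule mult_left_mono) 
    then show "norm (complex_of_real (w i) * p i * cnj (q i)) \<le> (w i * (cmod (p i))\<^sup>2 + w i * (cmod (q i))\<^sup>2) / 2"
    proof -
      have "norm (complex_of_real (w i) * p i * cnj (q i)) = w i * (cmod (p i) * cmod (q i))"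
        using w[of i] by (simp add: norm_mult abs_of_nonneg)
      with \<open>w i * (2 * (cmod (p i) * cmod (q i))) \<le> _\<close> show ?thesis
        by (simp add: distrib_left)
    qed
  qed
  then show ?thesis by (rule abs_summable_summable) 
qed

lemma ws_add:
  assumes w: "\<And>i. w i \<ge> 0" and p: "p \<in> ws w" and q: "q \<in> ws w"
  shows "(\<lambda>i. p i + q i) \<in> ws w"
proof -
  have s: "(\<lambda>i. 2 * (w i * (cmod (p i))\<^sup>2) + 2 * (w i * (cmod (q i))\<^sup>2)) summable_on UNIV"
    using p q unfolding ws_def by (intro summable_on_cmult_right summable_on_add) auto
  show ?thesis unfolding ws_def
  proof (simp, rule summable_on_comparison_test[OF s])
    fix i
    have "(cmod (p i + q i))\<^sup>2 \<le> 2 * (cmod (p i))\<^sup>2 + 2 * (cmod (q i))\<^sup>2"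
    proof -
      have "cmod (p i + q i) \<le> cmod (p i) + cmod (q i)" by (rule norm_triangle_ineq)
      then have "(cmod (p i + q i))\<^sup>2 \<le> (cmod (p i) + cmod (q i))\<^sup>2"
        by (simp add: power_mono)
      also have "\<dots> \<le> 2 * (cmod (p i))\<^sup>2 + 2 * (cmod (q i))\<^sup>2"
        using sum_squares_bound[of "cmod (p i)" "cmod (q i)"] by (simp add: power2_sum)
      finally show ?thesis .
    qed
    then have "w i * (cmod (p i + q i))\<^sup>2 \<le> w i * (2 * (cmod (p i))\<^sup>2 + 2 * (cmod (q i))\<^sup>2)"
      using w[of i] by (rule mult_left_mono)
    then show "w i * (cmod (p i + q i))\<^sup>2 \<le> 2 * (w i * (cmod (p i))\<^sup>2) + 2 * (w i * (cmod (q i))\<^sup>2)"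
      by (simp add: algebra_simps)
    show "0 \<le> w i * (cmod (p i + q i))\<^sup>2" using w[of i] by simp
  qed
qed

lemma ws_scale:
  assumes p: "p \<in> ws w" shows "(\<lambda>i. a * p i) \<in> ws w"
proof -
  have "(\<lambda>i. (cmod a)\<^sup>2 * (w i * (cmod (p i))\<^sup>2)) summable_on UNIV"
    using p unfolding ws_def by (intro summable_on_cmult_right) auto
  then show ?thesis unfolding ws_def by (simp add: norm_mult power_mult_distrib algebra_simps)
qed

lemma ws_neg: "p \<in> ws w \<Longrightarrow> (\<lambda>i. - p i) \<in> ws w"
  using ws_scale[of p w "-1"] by simp

lemma ws_diff:
  assumes w: "\<And>i. w i \<ge> 0" and p: "p \<in> ws w" and q: "q \<in> ws w"
  shows "(\<lambda>i. p i - q i) \<in> ws w"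
  using ws_add[OF w p ws_neg[OF q]] by simp

lemma wf_add:
  assumes w: "\<And>i. w i \<ge> 0" and "p \<in> ws w" "q \<in> ws w" "r \<in> ws w"
  shows "wf w (\<lambda>i. p i + q i) r = wf w p r + wf w q r"
proof -
  have "wf w (\<lambda>i. p i + q i) r = (\<Sum>\<^sub>\<infinity>i. complex_of_real (w i) * p i * cnj (r i) + complex_of_real (w i) * q i * cnj (r i))"
    unfolding wf_def by (intro infsum_cong) (simp add: algebra_simps)
  also have "\<dots> = wf w p r + wf w q r"
    unfolding wf_def by (intro infsum_add ws_prod_summable assms)
  finally show ?thesis .
qed

lemma wf_scale:
  shows "wf w (\<lambda>i. a * p i) r = a * wf w p r"
  unfolding wf_def
proof -
  have "(\<Sum>\<^sub>\<infinity>i. complex_of_real (w i) * (a * p i) * cnj (r i)) = (\<Sum>\<^sub>\<infinity>i. a * (complex_of_real (w i) * p i * cnj (r i)))"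
    by (simp add: algebra_simps)
  also have "\<dots> = a * (\<Sum>\<^sub>\<infinity>i. complex_of_real (w i) * p i * cnj (r i))"
  proof (cases "(\<lambda>i. complex_of_real (w i) * p i * cnj (r i)) summable_on UNIV")
    case True then show ?thesis by (rule infsum_cmult_right[of a, OF _]) 
  next
    case False
    show ?thesis
    proof (cases "a = 0")
      case True then show ?thesis by simp
    next
      case a: False
      have "\<not> (\<lambda>i. a * (complex_of_real (w i) * p i * cnj (r i))) summable_on UNIV"
      proof
        assume "(\<lambda>i. a * (complex_of_real (w i) * p i * cnj (r i))) summable_on UNIV"
        then have "(\<lambda>i. inverse a * (a * (complex_of_real (w i) * p i * cnj (r i)))) summable_on UNIV"
          by (rule summable_on_cmult_right)
        then have "(\<lambda>i. complex_of_real (w i) * p i * cnj (r i)) summable_on UNIV"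
          using a by (simp add: mult.assoc[symmetric])
        with False show False by simp
      qed
      with False show ?thesis by (simp add: infsum_not_exists)
    qed
  qed
  finally show "(\<Sum>\<^sub>\<infinity>i. complex_of_real (w i) * (a * p i) * cnj (r i)) = a * (\<Sum>\<^sub>\<infinity>i. complex_of_real (w i) * p i * cnj (r i))" .
qed

lemma wf_herm: "wf w p q = cnj (wf w q p)"
  unfolding wf_def infsum_cnj[symmetric] by (simp add: algebra_simps)

lemma wf_self:
  assumes "p \<in> ws w" shows "wf w p p = complex_of_real (EE w p)"
proof -
  have "wf w p p = (\<Sum>\<^sub>\<infinity>i. complex_of_real (w i * (cmod (p i))\<^sup>2))"
    unfolding wf_def by (intro infsum_cong) (simp only: mult.assoc complex_norm_square[symmetric] of_real_mult of_real_power)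
  also have "\<dots> = complex_of_real (EE w p)"
    unfolding EE_def using assms unfolding ws_def by (intro infsum_of_real') simp
  finally show ?thesis .
qed

lemma EE_nonneg: "(\<And>i. w i \<ge> 0) \<Longrightarrow> EE w p \<ge> 0"
  unfolding EE_def by (intro infsum_nonneg) simp

lemma EE_point:
  assumes w: "\<And>i. w i \<ge> 0" and p: "p \<in> ws w"
  shows "w i * (cmod (p i))\<^sup>2 \<le> EE w p"
  using finite_sum_le_infsum[of "\<lambda>i. w i * (cmod (p i))\<^sup>2" UNIV "{i}"] p w
  unfolding EE_def ws_def by simp

lemma EE_add_le:
  assumes w: "\<And>i. w i \<ge> 0" and p: "p \<in> ws w" and q: "q \<in> ws w"
  shows "EE w (\<lambda>i. p i + q i) \<le> 2 * EE w p + 2 * EE w q"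
proof -
  have "EE w (\<lambda>i. p i + q i) \<le> (\<Sum>\<^sub>\<infinity>i. 2 * (w i * (cmod (p i))\<^sup>2) + 2 * (w i * (cmod (q i))\<^sup>2))"
    unfolding EE_def
  proof (rule infsum_mono)
    show "(\<lambda>i. w i * (cmod (p i + q i))\<^sup>2) summable_on UNIV" using ws_add[OF w p q] by (simp add: ws_def)
    show "(\<lambda>i. 2 * (w i * (cmod (p i))\<^sup>2) + 2 * (w i * (cmod (q i))\<^sup>2)) summable_on UNIV"
      using p q unfolding ws_def by (intro summable_on_cmult_right summable_on_add) auto
    fix i
    have "(cmod (p i + q i))\<^sup>2 \<le> 2 * (cmod (p i))\<^sup>2 + 2 * (cmod (q i))\<^sup>2"
    proof -
      have "cmod (p i + q i) \<le> cmod (p i) + cmod (q i)" by (rule norm_triangle_ineq)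
      then have "(cmod (p i + q i))\<^sup>2 \<le> (cmod (p i) + cmod (q i))\<^sup>2"
        by (simp add: power_mono)
      also have "\<dots> \<le> 2 * (cmod (p i))\<^sup>2 + 2 * (cmod (q i))\<^sup>2"
        using sum_squares_bound[of "cmod (p i)" "cmod (q i)"] by (simp add: power2_sum)
      finally show ?thesis .
    qed
    then have "w i * (cmod (p i + q i))\<^sup>2 \<le> w i * (2 * (cmod (p i))\<^sup>2 + 2 * (cmod (q i))\<^sup>2)"
      using w[of i] by (rule mult_left_mono)
    then show "w i * (cmod (p i + q i))\<^sup>2 \<le> 2 * (w i * (cmod (p i))\<^sup>2) + 2 * (w i * (cmod (q i))\<^sup>2)"
      by (simp add: algebra_simps)
  qed
  also have "\<dots> = 2 * EE w p + 2 * EE w q"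
    unfolding EE_def using p q unfolding ws_def
    by (subst infsum_add) (auto intro!: summable_on_cmult_right simp: infsum_cmult_right')
  finally show ?thesis .
qed

lemma EE_fatou:
  assumes w: "\<And>i. w i \<ge> 0"
    and lim: "\<And>i. (\<lambda>k. p k i) \<longlonglongrightarrow> P i"
    and bd: "\<And>k. k \<ge> N \<Longrightarrow> p k \<in> ws w \<and> EE w (p k) \<le> e"
  shows "P \<in> ws w \<and> EE w P \<le> e"
proof -
  have fin: "sum (\<lambda>i. w i * (cmod (P i))\<^sup>2) F \<le> e" if "finite F" for F
  proof -
    have "(\<lambda>k. sum (\<lambda>i. w i * (cmod (p k i))\<^sup>2) F) \<longlonglongrightarrow> sum (\<lambda>i. w i * (cmod (P i))\<^sup>2) F"
      by (intro tendsto_sum tendsto_mult tendsto_const tendsto_power tendsto_norm lim)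
    moreover have "\<forall>\<^sub>F k in sequentially. sum (\<lambda>i. w i * (cmod (p k i))\<^sup>2) F \<le> e"
    proof (rule eventually_sequentiallyI[of N])
      fix k assume "N \<le> k"
      then have "p k \<in> ws w" "EE w (p k) \<le> e" using bd by auto
      then show "sum (\<lambda>i. w i * (cmod (p k i))\<^sup>2) F \<le> e"
        unfolding EE_def ws_def
        using finite_sum_le_infsum[of "\<lambda>i. w i * (cmod (p k i))\<^sup>2" UNIV F] that w by force
    qed
    ultimately show ?thesis by (rule tendsto_upperbound) simp
  qed
  have s: "(\<lambda>i. w i * (cmod (P i))\<^sup>2) summable_on UNIV"
    using fin w by (intro nonneg_bdd_above_summable_on) (auto intro!: bdd_aboveI)
  then show ?thesis unfolding ws_def EE_def
    using fin by (auto intro!: infsum_le_finite_sums)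
qed




definition sesq :: "('a \<Rightarrow> complex) set \<Rightarrow> (('a \<Rightarrow> complex) \<Rightarrow> ('a \<Rightarrow> complex) \<Rightarrow> complex) \<Rightarrow> bool" where
 "sesq S F \<longleftrightarrow> (\<forall>u\<in>S. \<forall>v\<in>S. (\<lambda>x. u x + v x) \<in> S) \<and> (\<forall>a. \<forall>u\<in>S. (\<lambda>x. a * u x) \<in> S)
   \<and> (\<forall>u\<in>S. \<forall>v\<in>S. \<forall>w\<in>S. F (\<lambda>x. u x + v x) w = F u w + F v w)
   \<and> (\<forall>a. \<forall>u\<in>S. \<forall>w\<in>S. F (\<lambda>x. a * u x) w = a * F u w)
   \<and> (\<forall>u\<in>S. \<forall>v\<in>S. F u v = cnj (F v u)) \<and> (\<forall>u\<in>S. 0 \<le> Re (F u u))"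

context fixes S F assumes sq: "sesq S F"
begin

lemma sq_add: "u \<in> S \<Longrightarrow> v \<in> S \<Longrightarrow> (\<lambda>x. u x + v x) \<in> S"
  using sq unfolding sesq_def by blast
lemma sq_scale: "u \<in> S \<Longrightarrow> (\<lambda>x. a * u x) \<in> S"
  using sq unfolding sesq_def by blast
lemma sq_diff: "u \<in> S \<Longrightarrow> v \<in> S \<Longrightarrow> (\<lambda>x. u x - v x) \<in> S"
  using sq_add[of u "\<lambda>x. (-1) * v x"] sq_scale[of v "-1"] by simp
lemma sq_Fadd: "u \<in> S \<Longrightarrow> v \<in> S \<Longrightarrow> w \<in> S \<Longrightarrow> F (\<lambda>x. u x + v x) w = F u w + F v w"
  using sq unfolding sesq_def by blast
lemma sq_Fscale: "u \<in> S \<Longrightarrow> w \<in> S \<Longrightarrow> F (\<lambda>x. a * u x) w = a * F u w"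
  using sq unfolding sesq_def by blast
lemma sq_herm: "u \<in> S \<Longrightarrow> v \<in> S \<Longrightarrow> F u v = cnj (F v u)"
  using sq unfolding sesq_def by blast
lemma sq_pos: "u \<in> S \<Longrightarrow> 0 \<le> Re (F u u)"
  using sq unfolding sesq_def by blast
lemma sq_Fdiff: "u \<in> S \<Longrightarrow> v \<in> S \<Longrightarrow> w \<in> S \<Longrightarrow> F (\<lambda>x. u x - v x) w = F u w - F v w"
  using sq_Fadd[of u "\<lambda>x. (-1) * v x" w] sq_scale[of v "-1"] sq_Fscale[of v w "-1"] by simp
lemma sq_Fadd_r: "u \<in> S \<Longrightarrow> v \<in> S \<Longrightarrow> w \<in> S \<Longrightarrow> F u (\<lambda>x. v x + w x) = F u v + F u w"
  using sq_herm[of u "\<lambda>x. v x + w x"] sq_add[of v w] sq_Fadd[of v w u] sq_herm[of v u] sq_herm[of w u]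
  by simp
lemma sq_Fscale_r: "u \<in> S \<Longrightarrow> v \<in> S \<Longrightarrow> F u (\<lambda>x. a * v x) = cnj a * F u v"
  using sq_herm[of u "\<lambda>x. a * v x"] sq_scale[of v a] sq_Fscale[of v u a] sq_herm[of v u]
  by simp
lemma sq_Fdiff_r: "u \<in> S \<Longrightarrow> v \<in> S \<Longrightarrow> w \<in> S \<Longrightarrow> F u (\<lambda>x. v x - w x) = F u v - F u w"
  using sq_herm[of u "\<lambda>x. v x - w x"] sq_diff[of v w] sq_Fdiff[of v w u] sq_herm[of v u] sq_herm[of w u]
  by simp
lemma sq_real: "u \<in> S \<Longrightarrow> F u u = complex_of_real (Re (F u u))"
  using sq_herm[of u u] by (metis Reals_cnj_iff complex_is_Real_iff of_real_Re)

lemma sq_expand: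
  assumes u: "u \<in> S" and w: "w \<in> S"
  shows "Re (F (\<lambda>x. u x + t * w x) (\<lambda>x. u x + t * w x))
       = Re (F u u) + 2 * Re (cnj t * F u w) + (cmod t)\<^sup>2 * Re (F w w)"
proof -
  have tw: "(\<lambda>x. t * w x) \<in> S" using w by (rule sq_scale)
  have "F (\<lambda>x. u x + t * w x) (\<lambda>x. u x + t * w x)
      = F u u + F u (\<lambda>x. t * w x) + (F (\<lambda>x. t * w x) u + F (\<lambda>x. t * w x) (\<lambda>x. t * w x))"
    using u tw sq_add[OF u tw] by (simp add: sq_Fadd sq_Fadd_r)
  also have "\<dots> = F u u + cnj t * F u w + (t * F w u + t * (cnj t * F w w))"
    using u w tw by (simp add: sq_Fscale sq_Fscale_r)
  finally have eq: "F (\<lambda>x. u x + t * w x) (\<lambda>x. u x + t * w x) = F u u + cnj t * F u w + (t * F w u + t * (cnj t * F w w))" .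
  have "F w u = cnj (F u w)" using sq_herm[OF w u] .
  moreover have "t * cnj t = complex_of_real ((cmod t)\<^sup>2)"
    by (rule complex_norm_square[symmetric])
  moreover have "Re (complex_of_real r * F w w) = r * Re (F w w)" for r
    by simp
  ultimately show ?thesis unfolding eq
    by (simp add: mult.assoc[symmetric])
qed


lemma sq_CS:
  assumes u: "u \<in> S" and v: "v \<in> S"
  shows "(cmod (F u v))\<^sup>2 \<le> Re (F u u) * Re (F v v)"
proof -
  define a where "a = F u v"
  define A where "A = Re (F u u)"
  define B where "B = Re (F v v)"
  define X where "X = (cmod a)\<^sup>2"
  have A0: "A \<ge> 0" "B \<ge> 0" using sq_pos[OF u] sq_pos[OF v] by (auto simp: A_def B_def)
  have X0: "X \<ge> 0" by (simp add: X_def)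
  have key: "0 \<le> A - 2 * s * X + s\<^sup>2 * X * B" for s :: real
  proof -
    define t where "t = - (complex_of_real s * a)"
    have "0 \<le> Re (F (\<lambda>x. u x + t * v x) (\<lambda>x. u x + t * v x))"
      by (intro sq_pos sq_add u sq_scale v)
    also have "\<dots> = A + 2 * Re (cnj t * a) + (cmod t)\<^sup>2 * B"
      unfolding A_def B_def a_def by (rule sq_expand[OF u v])
    also have "cnj t * a = - complex_of_real (s * X)"
      unfolding t_def X_def by (simp add: complex_norm_square[symmetric] mult.assoc mult.commute[of _ a])
    also have "(cmod t)\<^sup>2 = s\<^sup>2 * X"
      unfolding t_def X_def by (simp add: norm_mult power_mult_distrib)
    finally show ?thesis by (simp add: algebra_simps)
  qed
  have "X \<le> A * B"
  proof (cases "X = 0")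
    case True then show ?thesis using A0 by simp
  next
    case False
    then have Xp: "X > 0" using X0 by simp
    show ?thesis
    proof (cases "B = 0")
      case True
      have "0 \<le> A - 2 * ((A + 1) / (2 * X)) * X" using key[of "(A+1)/(2*X)"] True by simp
      also have "\<dots> = -1" using Xp by (simp add: field_simps)
      finally show ?thesis by simp
    next
      case False
      then have Bp: "B > 0" using A0 by simp
      have "0 \<le> A - 2 * (1/B) * X + (1/B)\<^sup>2 * X * B" by (rule key)
      also have "\<dots> = A - X / B" using Bp by (simp add: field_simps power2_eq_square)
      finally have "X / B \<le> A" by simp
      then show ?thesis using Bp by (simp add: field_simps)
    qed
  qed
  then show ?thesis by (simp add: X_def a_def A_def B_def)
qed

lemma sq_par:
  assumes u: "u \<in> S" and v: "v \<in> S"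
  shows "Re (F (\<lambda>x. u x + v x) (\<lambda>x. u x + v x)) + Re (F (\<lambda>x. u x - v x) (\<lambda>x. u x - v x))
     = 2 * Re (F u u) + 2 * Re (F v v)"
  using sq_expand[OF u v, of 1] sq_expand[OF u v, of "-1"] by simp

lemma sq_Nscale:
  assumes u: "u \<in> S"
  shows "Re (F (\<lambda>x. a * u x) (\<lambda>x. a * u x)) = (cmod a)\<^sup>2 * Re (F u u)"
proof -
  have "F (\<lambda>x. a * u x) (\<lambda>x. a * u x) = a * (cnj a * F u u)"
    using u sq_scale[OF u] by (simp add: sq_Fscale sq_Fscale_r)
  also have "\<dots> = (a * cnj a) * F u u"
    by (simp add: mult.assoc)
  also have "\<dots> = complex_of_real ((cmod a)\<^sup>2) * F u u"
    by (simp only: complex_norm_square)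
  finally show ?thesis by simp
qed

lemma sq_lim0:
  assumes u: "u \<in> S" and v: "\<And>n. v n \<in> S" and lim: "(\<lambda>n. Re (F (v n) (v n))) \<longlonglongrightarrow> 0"
  shows "(\<lambda>n. F u (v n)) \<longlonglongrightarrow> 0"
proof -
  have "(\<lambda>n. sqrt (Re (F u u) * Re (F (v n) (v n)))) \<longlonglongrightarrow> sqrt (Re (F u u) * 0)"
    by (intro tendsto_real_sqrt tendsto_mult tendsto_const lim)
  then have l: "(\<lambda>n. sqrt (Re (F u u) * Re (F (v n) (v n)))) \<longlonglongrightarrow> 0" by simp
  show ?thesis
  proof (rule tendsto_norm_zero_cancel, rule Lim_null_comparison[OF _ l])
    show "\<forall>\<^sub>F n in sequentially. norm (norm (F u (v n))) \<le> sqrt (Re (F u u) * Re (F (v n) (v n)))"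
      using sq_CS[OF u v] by (auto intro!: always_eventually real_le_rsqrt)
  qed
qed
end



definition delta :: "'v \<Rightarrow> 'v \<Rightarrow> complex" where
  "delta y = (\<lambda>x. if x = y then 1 else 0)"

definition dif :: "('v \<Rightarrow> complex) \<Rightarrow> 'v \<times> 'v \<Rightarrow> complex" where
  "dif u = (\<lambda>(x,y). u x - u y)"

lemma infsum_single:
  "(\<Sum>\<^sub>\<infinity>z. (if z = y then a else 0)) = (a::'b::{comm_monoid_add,t2_space})"
  by (rule infsumI, rule has_sum_finite_neutralI[of "{y}"]) auto

lemma summable_single:
  "(\<lambda>z. (if z = y then a else 0)) summable_on (UNIV::'a set)"
  using has_sum_finite_neutralI[of "{y}" UNIV "\<lambda>z. (if z = y then a else 0)" a]
  by (auto simp: summable_on_def)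

lemma summable_on_modify:
  fixes f g :: "'a \<Rightarrow> 'b :: {uniform_topological_group_add, topological_comm_monoid_add, ab_group_add, complete_uniform_space}"
  assumes "g summable_on UNIV" "\<And>x. x \<noteq> y \<Longrightarrow> f x = g x"
  shows "f summable_on UNIV"
proof -
  have "g summable_on (UNIV - {y})" using assms(1) by (rule summable_on_subset) auto
  then have "f summable_on (UNIV - {y})" by (rule summable_on_cong[THEN iffD1, rotated]) (use assms(2) in auto)
  then have "f summable_on insert y (UNIV - {y})" by (simp only: summable_on_insert_iff)
  then show ?thesis by simp
qed

lemma finite_support_summable:
  fixes f :: "'a \<Rightarrow> 'b::{comm_monoid_add,topological_space}"
  assumes "finite F" "\<And>x. x \<notin> F \<Longrightarrow> f x = 0"
  shows "f summable_on UNIV"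
  using has_sum_finite_neutralI[of F UNIV f "sum f F"] assms by (auto simp: summable_on_def)

lemma row_summable:
  fixes h :: "'a \<Rightarrow> 'b :: {comm_monoid_add, t2_space}"
  shows "(\<lambda>p. if fst p = y then h (snd p) else 0) summable_on UNIV \<longleftrightarrow> h summable_on UNIV"
    and "(\<Sum>\<^sub>\<infinity>p. if fst p = y then h (snd p) else 0) = (\<Sum>\<^sub>\<infinity>z. h z)"
proof -
  have inj: "inj_on (Pair y) UNIV" by (auto simp: inj_on_def)
  have e1: "(\<lambda>p. if fst p = y then h (snd p) else 0) summable_on UNIV \<longleftrightarrow>
      (\<lambda>p. if fst p = y then h (snd p) else 0) summable_on range (Pair y)"
    by (rule summable_on_cong_neutral) auto
  have e2: "(\<lambda>p. if fst p = y then h (snd p) else 0) summable_on range (Pair y) \<longleftrightarrow> h summable_on UNIV"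
    using summable_on_reindex[OF inj, of "\<lambda>p. if fst p = y then h (snd p) else 0"] by (simp add: o_def)
  show "(\<lambda>p. if fst p = y then h (snd p) else 0) summable_on UNIV \<longleftrightarrow> h summable_on UNIV"
    using e1 e2 by simp
  have "(\<Sum>\<^sub>\<infinity>p. if fst p = y then h (snd p) else 0) = (\<Sum>\<^sub>\<infinity>p\<in>range (Pair y). if fst p = y then h (snd p) else 0)"
    by (rule infsum_cong_neutral) auto
  also have "\<dots> = (\<Sum>\<^sub>\<infinity>z. h z)"
    using infsum_reindex[OF inj, of "\<lambda>p. if fst p = y then h (snd p) else 0"] by (simp add: o_def)
  finally show "(\<Sum>\<^sub>\<infinity>p. if fst p = y then h (snd p) else 0) = (\<Sum>\<^sub>\<infinity>z. h z)" .
qed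

lemma col_summable:
  fixes h :: "'a \<Rightarrow> 'b :: {comm_monoid_add, t2_space}"
  shows "(\<lambda>p. if snd p = y then h (fst p) else 0) summable_on UNIV \<longleftrightarrow> h summable_on UNIV"
    and "(\<Sum>\<^sub>\<infinity>p. if snd p = y then h (fst p) else 0) = (\<Sum>\<^sub>\<infinity>z. h z)"
proof -
  have inj: "inj_on (\<lambda>x. (x, y)) UNIV" by (auto simp: inj_on_def)
  have e1: "(\<lambda>p. if snd p = y then h (fst p) else 0) summable_on UNIV \<longleftrightarrow>
      (\<lambda>p. if snd p = y then h (fst p) else 0) summable_on range (\<lambda>x. (x, y))"
    by (rule summable_on_cong_neutral) auto
  have e2: "(\<lambda>p. if snd p = y then h (fst p) else 0) summable_on range (\<lambda>x. (x, y)) \<longleftrightarrow> h summable_on UNIV"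
    using summable_on_reindex[OF inj, of "\<lambda>p. if snd p = y then h (fst p) else 0"] by (simp add: o_def)
  show "(\<lambda>p. if snd p = y then h (fst p) else 0) summable_on UNIV \<longleftrightarrow> h summable_on UNIV"
    using e1 e2 by simp
  have "(\<Sum>\<^sub>\<infinity>p. if snd p = y then h (fst p) else 0) = (\<Sum>\<^sub>\<infinity>p\<in>range (\<lambda>x. (x, y)). if snd p = y then h (fst p) else 0)"
    by (rule infsum_cong_neutral) auto
  also have "\<dots> = (\<Sum>\<^sub>\<infinity>z. h z)"
    using infsum_reindex[OF inj, of "\<lambda>p. if snd p = y then h (fst p) else 0"] by (simp add: o_def)
  finally show "(\<Sum>\<^sub>\<infinity>p. if snd p = y then h (fst p) else 0) = (\<Sum>\<^sub>\<infinity>z. h z)" .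
qed

lemma delta_Cc: "delta y \<in> Cc"
  unfolding Cc_def delta_def by simp

lemma Cc_add: "u \<in> Cc \<Longrightarrow> v \<in> Cc \<Longrightarrow> (\<lambda>x. u x + v x) \<in> Cc"
  unfolding Cc_def mem_Collect_eq by (rule finite_subset[of _ "{x. u x \<noteq> 0} \<union> {x. v x \<noteq> 0}"]) auto

lemma Cc_scale: "u \<in> Cc \<Longrightarrow> (\<lambda>x. a * u x) \<in> Cc"
  unfolding Cc_def mem_Collect_eq by (rule finite_subset[of _ "{x. u x \<noteq> 0}"]) auto

lemma Cc_diff: "u \<in> Cc \<Longrightarrow> v \<in> Cc \<Longrightarrow> (\<lambda>x. u x - v x) \<in> Cc"
  using Cc_add[of u "\<lambda>x. (-1) * v x"] Cc_scale[of v "-1"] by simp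

lemma Cc_sum: "finite F \<Longrightarrow> (\<lambda>x. \<Sum>y\<in>F. a y * delta y x) \<in> Cc"
proof (induction F rule: finite_induct)
  case empty then show ?case by (simp add: Cc_def)
next
  case (insert y F)
  have "(\<lambda>x. a y * delta y x + (\<Sum>y\<in>F. a y * delta y x)) \<in> Cc"
    by (intro Cc_add Cc_scale delta_Cc insert.IH)
  then show ?case using insert by simp
qed

lemma Cc_expand:
  assumes "u \<in> Cc" shows "u = (\<lambda>x. \<Sum>y\<in>{y. u y \<noteq> 0}. u y * delta y x)"
proof
  fix x
  have "(\<Sum>y\<in>{y. u y \<noteq> 0}. u y * delta y x) = (\<Sum>y\<in>{y. u y \<noteq> 0}. if y = x then u x else 0)"
    by (rule sum.cong) (auto simp: delta_def)
  also have "\<dots> = u x" using assms by (simp add: Cc_def)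
  finally show "u x = (\<Sum>y\<in>{y. u y \<noteq> 0}. u y * delta y x)" by simp
qed

lemma lin_expand:
  assumes T: "Cc \<subseteq> T"
    and add: "\<And>u v. u \<in> T \<Longrightarrow> v \<in> T \<Longrightarrow> B (\<lambda>x. u x + v x) = B u + B v"
    and scl: "\<And>a u. u \<in> T \<Longrightarrow> B (\<lambda>x. a * u x) = a * B u"
    and F: "finite F"
  shows "B (\<lambda>x. \<Sum>y\<in>F. a y * delta y x) = (\<Sum>y\<in>F. a y * B (delta y))"
  using F
proof (induction F rule: finite_induct)
  case empty
  have "B (\<lambda>x. 0 * delta undefined x) = 0 * B (delta undefined)"
    by (rule scl[OF subsetD[OF T delta_Cc]])
  then show ?case by simp
next
  case (insert y F)
  have i1: "(\<lambda>x. a y * delta y x) \<in> T" by (rule subsetD[OF T Cc_scale[OF delta_Cc]])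
  have i2: "(\<lambda>x. \<Sum>y\<in>F. a y * delta y x) \<in> T" by (rule subsetD[OF T Cc_sum[OF insert.hyps(1)]])
  have "B (\<lambda>x. a y * delta y x + (\<Sum>y\<in>F. a y * delta y x)) = B (\<lambda>x. a y * delta y x) + B (\<lambda>x. \<Sum>y\<in>F. a y * delta y x)"
    by (rule add[OF i1 i2])
  also have "B (\<lambda>x. a y * delta y x) = a y * B (delta y)"
    by (rule scl[OF subsetD[OF T delta_Cc]])
  also note insert.IH
  finally show ?case using insert.hyps by simp
qed




lemma sqrt_tendsto0_iff:
  assumes "\<And>n. g n \<ge> 0"
  shows "(\<lambda>n. sqrt (g n)) \<longlonglongrightarrow> 0 \<longleftrightarrow> g \<longlonglongrightarrow> 0"
proof
  assume "(\<lambda>n. sqrt (g n)) \<longlonglongrightarrow> 0"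
  then have "(\<lambda>n. (sqrt (g n))\<^sup>2) \<longlonglongrightarrow> 0\<^sup>2" by (rule tendsto_power)
  then show "g \<longlonglongrightarrow> 0" using assms by simp
next
  assume "g \<longlonglongrightarrow> 0"
  then have "(\<lambda>n. sqrt (g n)) \<longlonglongrightarrow> sqrt 0" by (rule tendsto_real_sqrt)
  then show "(\<lambda>n. sqrt (g n)) \<longlonglongrightarrow> 0" by simp
qed

lemma cauchy_from:
  fixes d :: "nat \<Rightarrow> nat \<Rightarrow> real"
  assumes d0: "\<And>n k. 0 \<le> d n k" and dle: "\<And>n k. d n k \<le> 2 * g n + 2 * g k"
    and g: "g \<longlonglongrightarrow> 0"
  shows "\<forall>e>0. \<exists>N. \<forall>n\<ge>N. \<forall>k\<ge>N. sqrt (d n k) < e"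
proof (intro allI impI)
  fix e :: real assume e: "e > 0"
  have "e\<^sup>2 / 4 > 0" using e by simp
  then obtain N where N: "\<And>n. n \<ge> N \<Longrightarrow> norm (g n - 0) < e\<^sup>2 / 4"
    using g unfolding LIMSEQ_def dist_norm by blast
  show "\<exists>N. \<forall>n\<ge>N. \<forall>k\<ge>N. sqrt (d n k) < e"
  proof (intro exI allI impI)
    fix n k assume n: "n \<ge> N" and k: "k \<ge> N"
    have "d n k < e\<^sup>2" using dle[of n k] N[OF n] N[OF k] by simp
    then have "sqrt (d n k) < sqrt (e\<^sup>2)" by (rule real_sqrt_less_mono)
    then show "sqrt (d n k) < e" using e by simp
  qed
qed

lemma pointwise_from:
  fixes a :: "nat \<Rightarrow> complex"
  assumes b: "\<And>n. (cmod (a n))\<^sup>2 * M \<le> g n" and M: "M > 0" and g: "g \<longlonglongrightarrow> 0"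
  shows "a \<longlonglongrightarrow> 0"
proof (rule tendsto_norm_zero_cancel)
  have "(\<lambda>n. sqrt (g n / M)) \<longlonglongrightarrow> sqrt (0 / M)"
    by (intro tendsto_real_sqrt tendsto_divide g tendsto_const) (use M in auto)
  then have l: "(\<lambda>n. sqrt (g n / M)) \<longlonglongrightarrow> 0" by simp
  show "(\<lambda>n. norm (a n)) \<longlonglongrightarrow> 0"
  proof (rule Lim_null_comparison[OF _ l], intro always_eventually allI)
    fix n
    have "(cmod (a n))\<^sup>2 \<le> g n / M" using b[of n] M by (simp add: field_simps)
    then show "norm (norm (a n)) \<le> sqrt (g n / M)" by (simp add: real_le_rsqrt)
  qed
qed









lemma EE_diff_le:
  assumes w: "\<And>i. w i \<ge> 0" and p: "p \<in> ws w" and q: "q \<in> ws w"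
  shows "EE w (\<lambda>i. p i - q i) \<le> 2 * EE w p + 2 * EE w q"
proof -
  have "EE w (\<lambda>i. p i + - q i) \<le> 2 * EE w p + 2 * EE w (\<lambda>i. - q i)"
    by (rule EE_add_le[OF w p ws_neg[OF q]])
  moreover have "EE w (\<lambda>i. - q i) = EE w q" unfolding EE_def by simp
  ultimately show ?thesis by simp
qed








context
  fixes m :: "'v::countable \<Rightarrow> real" and b :: "'v \<Rightarrow> 'v \<Rightarrow> real" and c :: "'v \<Rightarrow> real"
    and D :: "('v \<Rightarrow> complex) set"
    and Q :: "('v \<Rightarrow> complex) \<Rightarrow> ('v \<Rightarrow> complex) \<Rightarrow> complex"
  assumes mpos: "\<forall>x. m x > 0" and G: "is_graph b c" and CC: "condC b c m D Q"
begin


lemma m_pos: "m x > 0" using mpos by simp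
lemma m_nn: "m x \<ge> 0" using m_pos[of x] by simp
lemma b_nn: "b x y \<ge> 0" using G unfolding is_graph_def by simp
lemma c_nn: "c x \<ge> 0" using G unfolding is_graph_def by simp
lemma b_sym: "b x y = b y x" using G unfolding is_graph_def by simp
lemma b_diag: "b x x = 0" using G unfolding is_graph_def by simp
lemma b_summ: "(\<lambda>y. b x y) summable_on UNIV" using G unfolding is_graph_def by blast
lemma bb_nn: "(case i of (x, y) \<Rightarrow> b x y) \<ge> 0" by (cases i) (simp add: b_nn)

lemma symf: "is_sym_form m D Q" using CC unfolding condC_def by simp
lemma D_l2: "u \<in> D \<Longrightarrow> u \<in> ws m"
  using symf unfolding is_sym_form_def l2_def ws_def by (auto simp: mult.commute)
lemma D_add: "u \<in> D \<Longrightarrow> v \<in> D \<Longrightarrow> (\<lambda>x. u x + v x) \<in> D"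
  using symf unfolding is_sym_form_def by blast
lemma D_scale: "u \<in> D \<Longrightarrow> (\<lambda>x. a * u x) \<in> D"
  using symf unfolding is_sym_form_def by blast
lemma Q_add: "u \<in> D \<Longrightarrow> v \<in> D \<Longrightarrow> w \<in> D \<Longrightarrow> Q (\<lambda>x. u x + v x) w = Q u w + Q v w"
  using symf unfolding is_sym_form_def by blast
lemma Q_scale: "u \<in> D \<Longrightarrow> w \<in> D \<Longrightarrow> Q (\<lambda>x. a * u x) w = a * Q u w"
  using symf unfolding is_sym_form_def by blast
lemma Q_herm: "u \<in> D \<Longrightarrow> v \<in> D \<Longrightarrow> Q u v = cnj (Q v u)"
  using symf unfolding is_sym_form_def by blast
lemma Q_pos: "u \<in> D \<Longrightarrow> 0 \<le> Re (Q u u)"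
  using CC unfolding condC_def nonneg_form_def by blast
lemma Cc_D: "Cc \<subseteq> D" using CC unfolding condC_def by blast
lemma closedQ: "closed_form m D Q" using CC unfolding condC_def by blast
lemma C2: "u \<in> D \<Longrightarrow> v \<in> Cc \<Longrightarrow>
   (\<lambda>x. cmod (u x * cnj (Ltilde b c m v x) * complex_of_real (m x))) summable_on UNIV
   \<and> (\<Sum>\<^sub>\<infinity>x. u x * cnj (Ltilde b c m v x) * complex_of_real (m x)) = Q u v"
  using CC unfolding condC_def by blast

lemma ip_wf: "ip m u v = wf m u v"
  unfolding ip_def wf_def by (simp add: mult_ac)

lemma qip_sesq: "sesq D (qip m Q)"
  unfolding sesq_def qip_def ip_wf
proof (intro conjI ballI allI)
  fix u v w assume u: "u \<in> D" and v: "v \<in> D" and w: "w \<in> D"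
  show "(\<lambda>x. u x + v x) \<in> D" by (rule D_add[OF u v])
  show "Q (\<lambda>x. u x + v x) w + wf m (\<lambda>x. u x + v x) w = Q u w + wf m u w + (Q v w + wf m v w)"
    using Q_add[OF u v w] wf_add[of m, OF m_nn D_l2[OF u] D_l2[OF v] D_l2[OF w]] by simp
  show "Q u v + wf m u v = cnj (Q v u + wf m v u)"
    using Q_herm[OF u v] wf_herm[of m u v] by simp
next
  fix a u w assume u: "u \<in> D" and w: "w \<in> D"
  show "(\<lambda>x. a * u x) \<in> D" by (rule D_scale[OF u])
  show "Q (\<lambda>x. a * u x) w + wf m (\<lambda>x. a * u x) w = a * (Q u w + wf m u w)"
    using Q_scale[OF u w] wf_scale[of m a u w] by (simp add: distrib_left)
next
  fix u assume u: "u \<in> D"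
  show "0 \<le> Re (Q u u + wf m u u)"
    using Q_pos[OF u] wf_self[OF D_l2[OF u]] EE_nonneg[of m, OF m_nn] by simp
qed

lemma L_delta:
  "Ltilde b c m (delta y) x = complex_of_real (if x = y then ((\<Sum>\<^sub>\<infinity>z. b y z) + c y) / m y else - b x y / m x)"
proof (cases "x = y")
  case True
  have "(\<Sum>\<^sub>\<infinity>z. complex_of_real (b x z) * (delta y x - delta y z)) = (\<Sum>\<^sub>\<infinity>z. complex_of_real (b y z))"
    using True by (intro infsum_cong) (auto simp: delta_def b_diag)
  also have "\<dots> = complex_of_real (\<Sum>\<^sub>\<infinity>z. b y z)" by (rule infsum_of_real'[OF b_summ])
  finally show ?thesis unfolding Ltilde_def using True m_pos[of y]
    by (simp add: delta_def add_divide_distrib)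
next
  case False
  have "(\<Sum>\<^sub>\<infinity>z. complex_of_real (b x z) * (delta y x - delta y z)) = (\<Sum>\<^sub>\<infinity>z. if z = y then - complex_of_real (b x y) else 0)"
    using False by (intro infsum_cong) (auto simp: delta_def)
  also have "\<dots> = - complex_of_real (b x y)" by (rule infsum_single)
  finally show ?thesis unfolding Ltilde_def using False
    by (simp add: delta_def)
qed

lemma D_Ftilde: "D \<subseteq> Ftilde b"
proof
  fix u assume u: "u \<in> D"
  show "u \<in> Ftilde b" unfolding Ftilde_def
  proof (intro CollectI allI)
    fix x
    have g: "(\<lambda>z. cmod (u z * cnj (Ltilde b c m (delta x) z) * complex_of_real (m z))) summable_on UNIV"
      using C2[OF u delta_Cc] by blast
    show "(\<lambda>y. cmod (complex_of_real (b x y) * u y)) summable_on UNIV"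
    proof (rule summable_on_modify[OF g])
      fix z assume "z \<noteq> x"
      then have "Ltilde b c m (delta x) z = complex_of_real (- b z x / m z)"
        using L_delta[of x z] by simp
      then have e1: "cmod (u z * cnj (Ltilde b c m (delta x) z) * complex_of_real (m z)) = cmod (u z) * b z x"
        using m_pos[of z] b_nn[of z x] by (simp add: norm_mult norm_divide)
      have e2: "cmod (complex_of_real (b x z) * u z) = cmod (u z) * b z x"
        using b_nn[of x z] by (simp add: norm_mult b_sym[of x z])
      show "cmod (complex_of_real (b x z) * u z) = cmod (u z * cnj (Ltilde b c m (delta x) z) * complex_of_real (m z))"
        using e1 e2 by (rule trans[OF _ sym, rotated])
    qed
  qed
qed

lemma bu_summable: "u \<in> D \<Longrightarrow> (\<lambda>z. complex_of_real (b y z) * u z) summable_on UNIV"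
  by (rule abs_summable_summable) (use D_Ftilde in \<open>auto simp: Ftilde_def\<close>)

lemma qip_delta:
  assumes u: "u \<in> D"
  shows "qip m Q u (delta y) = (Ltilde b c m u y + u y) * complex_of_real (m y)"
proof -
  define S where "S = (\<Sum>\<^sub>\<infinity>z. b y z)"
  have "Q u (delta y) = (\<Sum>\<^sub>\<infinity>x. u x * cnj (Ltilde b c m (delta y) x) * complex_of_real (m x))"
    using C2[OF u delta_Cc] by simp
  also have "\<dots> = (\<Sum>\<^sub>\<infinity>x. - (complex_of_real (b y x) * u x) + (if x = y then u y * complex_of_real (S + c y) else 0))"
  proof (intro infsum_cong)
    fix x show "u x * cnj (Ltilde b c m (delta y) x) * complex_of_real (m x) =
       - (complex_of_real (b y x) * u x) + (if x = y then u y * complex_of_real (S + c y) else 0)"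
      using m_pos[of x] by (cases "x = y") (auto simp: L_delta S_def b_diag b_sym[of x y])
  qed
  also have "\<dots> = - (\<Sum>\<^sub>\<infinity>x. complex_of_real (b y x) * u x) + u y * complex_of_real (S + c y)"
    by (subst infsum_add) (auto simp: infsum_uminus summable_on_uminus bu_summable[OF u] summable_single infsum_single)
  finally have Qe: "Q u (delta y) = - (\<Sum>\<^sub>\<infinity>x. complex_of_real (b y x) * u x) + u y * complex_of_real (S + c y)" .
  have "(\<Sum>\<^sub>\<infinity>z. complex_of_real (b y z) * (u y - u z)) = (\<Sum>\<^sub>\<infinity>z. u y * complex_of_real (b y z) + - (complex_of_real (b y z) * u z))"
    by (intro infsum_cong) (simp add: algebra_simps)
  also have "\<dots> = u y * complex_of_real S - (\<Sum>\<^sub>\<infinity>z. complex_of_real (b y z) * u z)"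
    by (subst infsum_add) (auto simp: infsum_uminus summable_on_uminus bu_summable[OF u] 
       summable_on_cmult_right summable_on_of_real b_summ infsum_cmult_right' infsum_of_real'[OF b_summ] S_def)
  finally have Le: "(\<Sum>\<^sub>\<infinity>z. complex_of_real (b y z) * (u y - u z)) = u y * complex_of_real S - (\<Sum>\<^sub>\<infinity>z. complex_of_real (b y z) * u z)" .
  have Ie: "ip m u (delta y) = u y * complex_of_real (m y)"
  proof -
    have "ip m u (delta y) = (\<Sum>\<^sub>\<infinity>x. if x = y then u y * complex_of_real (m y) else 0)"
      unfolding ip_def by (intro infsum_cong) (auto simp: delta_def)
    then show ?thesis by (simp add: infsum_single)
  qed
  show ?thesis unfolding qip_def Qe Ie Ltilde_def Le using m_pos[of y]
    by (simp add: field_simps)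
qed




lemmas facts = m_pos m_nn b_nn c_nn
  b_sym b_diag b_summ bb_nn

lemma mp: "m x > 0" by (rule facts(1))
lemma bn: "b x y \<ge> 0" by (rule facts(3))
lemma cn: "c x \<ge> 0" by (rule facts(4))
lemma bs: "b x y = b y x" by (rule facts(5))
lemma bd: "b x x = 0" by (rule facts(6))
lemma bsum: "(\<lambda>y. b x y) summable_on UNIV" by (rule facts(7))
lemma bbn: "case_prod b i \<ge> 0" by (cases i) (simp add: bn)
lemma mn: "m x \<ge> 0" using mp[of x] by simp

lemma QN_wf: "QN b c u v = 1/2 * wf (case_prod b) (dif u) (dif v) + wf c u v"
  unfolding QN_def wf_def dif_def case_prod_unfold by simp

lemma DN_iff: "u \<in> DN b c m \<longleftrightarrow> u \<in> ws m \<and> dif u \<in> ws (case_prod b) \<and> u \<in> ws c"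
  unfolding DN_def ws_def l2_def dif_def case_prod_unfold by (simp add: mult.commute)

lemma dif_add: "dif (\<lambda>x. u x + v x) = (\<lambda>i. dif u i + dif v i)"
  unfolding dif_def by (auto simp: case_prod_beta)
lemma dif_scale: "dif (\<lambda>x. a * u x) = (\<lambda>i. a * dif u i)"
  unfolding dif_def by (auto simp: case_prod_beta algebra_simps)
lemma dif_diff: "dif (\<lambda>x. u x - v x) = (\<lambda>i. dif u i - dif v i)"
  unfolding dif_def by (auto simp: case_prod_beta)

lemma DN_add: "u \<in> DN b c m \<Longrightarrow> v \<in> DN b c m \<Longrightarrow> (\<lambda>x. u x + v x) \<in> DN b c m"
  unfolding DN_iff dif_add
  using ws_add[of m, OF mn, of u v] ws_add[of c, OF cn, of u v] ws_add[of "case_prod b", OF bbn, of "dif u" "dif v"] by simp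
lemma DN_scale: "u \<in> DN b c m \<Longrightarrow> (\<lambda>x. a * u x) \<in> DN b c m"
  unfolding DN_iff dif_scale using ws_scale[of u m a] ws_scale[of u c a] ws_scale[of "dif u" "case_prod b" a] by simp
lemma DN_diff: "u \<in> DN b c m \<Longrightarrow> v \<in> DN b c m \<Longrightarrow> (\<lambda>x. u x - v x) \<in> DN b c m"
  unfolding DN_iff dif_diff
  using ws_diff[of m, OF mn, of u v] ws_diff[of c, OF cn, of u v] ws_diff[of "case_prod b", OF bbn, of "dif u" "dif v"] by simp

lemma QN_add: "u \<in> DN b c m \<Longrightarrow> v \<in> DN b c m \<Longrightarrow> w \<in> DN b c m \<Longrightarrow>
    QN b c (\<lambda>x. u x + v x) w = QN b c u w + QN b c v w"
  unfolding QN_wf DN_iff dif_add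
  using wf_add[of m, OF mn, of u v w] wf_add[of c, OF cn, of u v w] wf_add[of "case_prod b", OF bbn, of "dif u" "dif v" "dif w"] by (simp add: algebra_simps)
lemma QN_scale: "QN b c (\<lambda>x. a * u x) w = a * QN b c u w"
  unfolding QN_wf dif_scale wf_scale by (simp add: algebra_simps)

lemma NQN: "u \<in> DN b c m \<Longrightarrow>
    Re (QN b c u u + ip m u u) = EE (case_prod b) (dif u) / 2 + EE c u + EE m u"
  unfolding QN_wf DN_iff ip_wf by (simp add: wf_self)

lemma ws_finite: "finite F \<Longrightarrow> (\<And>x. x \<notin> F \<Longrightarrow> u x = 0) \<Longrightarrow> u \<in> ws w"
  unfolding ws_def mem_Collect_eq by (rule finite_support_summable[of F]) auto

lemma delta_DN: "delta y \<in> DN b c m"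
  unfolding DN_iff
proof (intro conjI)
  show "delta y \<in> ws m" "delta y \<in> ws c" by (rule ws_finite[of "{y}"], auto simp: delta_def)+
  have s1: "(\<lambda>p. if fst p = y then b y (snd p) else 0) summable_on UNIV"
    using row_summable(1)[of y "b y"] bsum by simp
  have s2: "(\<lambda>p. if snd p = y then b (fst p) y else 0) summable_on UNIV"
    using col_summable(1)[of y "\<lambda>x. b x y"] bsum[of y] by (simp add: bs)
  show "dif (delta y) \<in> ws (case_prod b)"
    unfolding ws_def
  proof (simp, rule summable_on_comparison_test[OF summable_on_add[OF s1 s2]])
    fix p :: "'v \<times> 'v"
    obtain x z where p: "p = (x, z)" by (cases p)
    show "case_prod b p * (cmod (dif (delta y) p))\<^sup>2 \<le> (if fst p = y then b y (snd p) else 0) + (if snd p = y then b (fst p) y else 0)"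
      using bn[of y z] bn[of x y] unfolding p by (auto simp: dif_def delta_def bd)
    show "0 \<le> case_prod b p * (cmod (dif (delta y) p))\<^sup>2" using bbn[of p] by simp
  qed
qed

lemma Cc_DN: "Cc \<subseteq> DN b c m"
proof
  fix u :: "'v \<Rightarrow> complex" assume u: "u \<in> Cc"
  have "finite F \<Longrightarrow> (\<lambda>x. \<Sum>y\<in>F. a y * delta y x) \<in> DN b c m" for F a
  proof (induction F rule: finite_induct)
    case empty
    have "(\<lambda>x. 0 * delta undefined x) \<in> DN b c m" by (rule DN_scale[OF delta_DN])
    then show ?case by simp
  next
    case (insert y F)
    have "(\<lambda>x. a y * delta y x + (\<Sum>y\<in>F. a y * delta y x)) \<in> DN b c m"
      by (rule DN_add[OF DN_scale[OF delta_DN] insert.IH])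
    then show ?case using insert.hyps by simp
  qed
  moreover have "finite {y. u y \<noteq> 0}" using u by (simp add: Cc_def)
  ultimately show "u \<in> DN b c m" by (subst Cc_expand[OF u]) 
qed


lemma Cc_bounded: "u \<in> Cc \<Longrightarrow> \<exists>K. \<forall>x. cmod (u x) \<le> K"
proof -
  assume u: "u \<in> Cc"
  have fin: "finite {x. u x \<noteq> 0}" using u by (simp add: Cc_def)
  have "cmod (u x) \<le> (\<Sum>z\<in>{x. u x \<noteq> 0}. cmod (u z))" for x
  proof (cases "u x = 0")
    case True then show ?thesis by (simp add: sum_nonneg)
  next
    case False
    then show ?thesis using fin by (intro member_le_sum) auto
  qed
  then show ?thesis by blast
qed

lemma QN_delta:
  assumes psi: "psi \<in> Cc"
  shows "QN b c (delta y) psi = cnj (Ltilde b c m psi y) * complex_of_real (m y)"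
proof -
  define h where "h z = complex_of_real (b y z) * cnj (psi y - psi z)" for z
  obtain K where K: "\<And>x. cmod (psi x) \<le> K" using Cc_bounded[OF psi] by blast
  have hs: "h summable_on UNIV"
  proof (rule abs_summable_summable)
    have "(\<lambda>z. b y z * (2 * K)) summable_on UNIV" by (intro summable_on_cmult_left bsum)
    then show "(\<lambda>z. norm (h z)) summable_on UNIV"
    proof (rule Infinite_Sum.abs_summable_on_comparison_test')
      fix z
      have "cmod (psi y - psi z) \<le> 2 * K"
        using norm_triangle_ineq4[of "psi y" "psi z"] K[of y] K[of z] by simp
      then have "b y z * cmod (psi y - psi z) \<le> b y z * (2 * K)"
        by (rule mult_left_mono) (rule bn)
      then show "norm (h z) \<le> b y z * (2 * K)"
        unfolding h_def using bn[of y z] by (simp add: norm_mult del: complex_cnj_diff)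
    qed
  qed
  have "wf (case_prod b) (dif (delta y)) (dif psi)
      = (\<Sum>\<^sub>\<infinity>p. (if fst p = y then h (snd p) else 0) + (if snd p = y then h (fst p) else 0))"
    unfolding wf_def
  proof (intro infsum_cong)
    fix p :: "'v \<times> 'v"
    obtain x z where p: "p = (x, z)" by (cases p)
    show "complex_of_real (case_prod b p) * dif (delta y) p * cnj (dif psi p) =
        (if fst p = y then h (snd p) else 0) + (if snd p = y then h (fst p) else 0)"
      unfolding p h_def dif_def delta_def
      by (auto simp: bd bs[of x y] algebra_simps)
  qed
  also have "\<dots> = (\<Sum>\<^sub>\<infinity>z. h z) + (\<Sum>\<^sub>\<infinity>z. h z)"
    using row_summable[of y h] col_summable[of y h] hs by (subst infsum_add) auto
  finally have wb: "wf (case_prod b) (dif (delta y)) (dif psi) = 2 * (\<Sum>\<^sub>\<infinity>z. h z)" by simp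
  have wc: "wf c (delta y) psi = complex_of_real (c y) * cnj (psi y)"
  proof -
    have "wf c (delta y) psi = (\<Sum>\<^sub>\<infinity>x. if x = y then complex_of_real (c y) * cnj (psi y) else 0)"
      unfolding wf_def by (intro infsum_cong) (auto simp: delta_def)
    then show ?thesis by (simp add: infsum_single)
  qed
  have "cnj (\<Sum>\<^sub>\<infinity>z. complex_of_real (b y z) * (psi y - psi z)) = (\<Sum>\<^sub>\<infinity>z. h z)"
    unfolding infsum_cnj[symmetric] h_def by simp
  then show ?thesis
    unfolding QN_wf wb wc Ltilde_def using mp[of y] by (simp add: field_simps)
qed

lemma Q_delta_Cc:
  assumes psi: "psi \<in> Cc"
  shows "Q (delta y) psi = cnj (Ltilde b c m psi y) * complex_of_real (m y)"
proof -
  have "Q (delta y) psi = (\<Sum>\<^sub>\<infinity>x. delta y x * cnj (Ltilde b c m psi x) * complex_of_real (m x))"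
    using C2[OF subsetD[OF Cc_D delta_Cc] psi] by simp
  also have "\<dots> = (\<Sum>\<^sub>\<infinity>x. if x = y then cnj (Ltilde b c m psi y) * complex_of_real (m y) else 0)"
    by (intro infsum_cong) (auto simp: delta_def)
  finally show ?thesis by (simp add: infsum_single)
qed

lemma Q_eq_QN:
  assumes phi: "phi \<in> Cc" and psi: "psi \<in> Cc"
  shows "Q phi psi = QN b c phi psi"
proof -
  have fin: "finite {y. phi y \<noteq> 0}" using phi by (simp add: Cc_def)
  have DD: "Cc \<subseteq> D" by (rule Cc_D)
  have pD: "psi \<in> D" using DD psi by blast
  have "Q phi psi = Q (\<lambda>x. \<Sum>y\<in>{y. phi y \<noteq> 0}. phi y * delta y x) psi"
    by (subst Cc_expand[OF phi]) (rule refl)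
  also have "\<dots> = (\<Sum>y\<in>{y. phi y \<noteq> 0}. phi y * Q (delta y) psi)"
    by (rule lin_expand[where B = "\<lambda>u. Q u psi", OF DD _ _ fin])
       (auto intro: Q_add Q_scale pD)
  also have "\<dots> = (\<Sum>y\<in>{y. phi y \<noteq> 0}. phi y * QN b c (delta y) psi)"
    by (intro sum.cong refl) (simp add: Q_delta_Cc[OF psi] QN_delta[OF psi])
  also have "\<dots> = QN b c (\<lambda>x. \<Sum>y\<in>{y. phi y \<noteq> 0}. phi y * delta y x) psi"
    by (rule lin_expand[where B = "\<lambda>u. QN b c u psi", OF Cc_DN _ _ fin, symmetric])
       (auto intro: QN_add QN_scale subsetD[OF Cc_DN psi])
  also have "\<dots> = QN b c phi psi"
    by (subst (2) Cc_expand[OF phi]) (rule refl)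
  finally show ?thesis .
qed



lemmas SQ = qip_sesq
lemmas CcD = Cc_D
lemmas qipd = qip_delta
lemmas DL2 = D_l2
lemmas QeqQN = Q_eq_QN
lemmas DNiff = DN_iff
lemmas CcDN = Cc_DN
lemmas DNdiff = DN_diff
lemmas ipwf = ip_wf
lemmas clQ = closedQ
lemmas difdiff = dif_diff
lemmas Qpos = Q_pos

lemma CcD': "u \<in> Cc \<Longrightarrow> u \<in> D" using CcD by blast
lemma CcDN': "u \<in> Cc \<Longrightarrow> u \<in> DN b c m" using CcDN by blast

lemma NQ_point:
  assumes u: "u \<in> D" shows "(cmod (u x))\<^sup>2 * m x \<le> Re (qip m Q u u)"
proof -
  have "Re (qip m Q u u) = Re (Q u u) + EE m u"
    unfolding qip_def ipwf using wf_self[OF DL2[OF u]] by simp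
  moreover have "0 \<le> Re (Q u u)" by (rule Qpos[OF u])
  moreover have "m x * (cmod (u x))\<^sup>2 \<le> EE m u" by (rule EE_point[of m, OF mn DL2[OF u]])
  ultimately show ?thesis by (simp add: mult.commute)
qed

lemma NN_point:
  assumes u: "u \<in> DN b c m" shows "(cmod (u x))\<^sup>2 * m x \<le> Re (QN b c u u + ip m u u)"
proof -
  have "m x * (cmod (u x))\<^sup>2 \<le> EE m u" using u unfolding DNiff by (intro EE_point[of m, OF mn]) auto
  moreover have "EE (case_prod b) (dif u) \<ge> 0" by (rule EE_nonneg) (rule bbn)
  moreover have "EE c u \<ge> 0" by (rule EE_nonneg) (rule cn)
  ultimately show ?thesis unfolding NQN[OF u] by (simp add: mult.commute)
qed

lemma NN_nonneg:
  assumes u: "u \<in> DN b c m" shows "0 \<le> Re (QN b c u u + ip m u u)"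
  using NN_point[OF u, of undefined] mp[of undefined] by (smt (verit) mult_nonneg_nonneg zero_le_power2)

lemma NN_diff_le:
  assumes p: "p \<in> DN b c m" and q: "q \<in> DN b c m"
  shows "Re (QN b c (\<lambda>x. p x - q x) (\<lambda>x. p x - q x) + ip m (\<lambda>x. p x - q x) (\<lambda>x. p x - q x))
    \<le> 2 * Re (QN b c p p + ip m p p) + 2 * Re (QN b c q q + ip m q q)"
proof -
  have pq: "(\<lambda>x. p x - q x) \<in> DN b c m" by (rule DNdiff[OF p q])
  have a: "EE (case_prod b) (dif (\<lambda>x. p x - q x)) \<le> 2 * EE (case_prod b) (dif p) + 2 * EE (case_prod b) (dif q)"
    unfolding difdiff using p q unfolding DNiff by (intro EE_diff_le[of "case_prod b", OF bbn]) auto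
  have b: "EE c (\<lambda>x. p x - q x) \<le> 2 * EE c p + 2 * EE c q"
    using p q unfolding DNiff by (intro EE_diff_le[of c, OF cn]) auto
  have c: "EE m (\<lambda>x. p x - q x) \<le> 2 * EE m p + 2 * EE m q"
    using p q unfolding DNiff by (intro EE_diff_le[of m, OF mn]) auto
  show ?thesis unfolding NQN[OF pq] NQN[OF p] NQN[OF q] using a b c by simp
qed

lemma QN_zero: "QN b c (\<lambda>x. 0) (\<lambda>x. 0) = 0"
  unfolding QN_def by (simp add: case_prod_unfold)

lemma Cc_DQD: "u \<in> Cc \<Longrightarrow> u \<in> DQD b c m"
proof -
  assume u: "u \<in> Cc"
  have e: "(\<lambda>n. qnorm m (QN b c) (\<lambda>x. u x - u x)) = (\<lambda>n. 0)"
    unfolding qnorm_def by (simp add: QN_zero ip_def)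
  show ?thesis unfolding DQD_def mem_Collect_eq
    by (intro conjI CcDN'[OF u] exI[of _ "\<lambda>n. u"]) (simp_all only: e u tendsto_const simp_thms)
qed

lemma NQ_Cc:
  assumes "f \<in> Cc" shows "Re (qip m Q f f) = Re (QN b c f f + ip m f f)"
  unfolding qip_def using QeqQN[OF assms assms] by simp

lemma DQD_D:
  assumes v: "v \<in> DQD b c m"
  shows "v \<in> D \<and> (\<exists>phi. (\<forall>n. phi n \<in> Cc) \<and> (\<lambda>n. Re (qip m Q (\<lambda>x. phi n x - v x) (\<lambda>x. phi n x - v x))) \<longlonglongrightarrow> 0)"
proof -
  from v obtain phi where vN: "v \<in> DN b c m" and phi: "\<And>n. phi n \<in> Cc"
    and lim: "(\<lambda>n. qnorm m (QN b c) (\<lambda>x. phi n x - v x)) \<longlonglongrightarrow> 0"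
    unfolding DQD_def by blast
  define g where "g n = Re (QN b c (\<lambda>x. phi n x - v x) (\<lambda>x. phi n x - v x) + ip m (\<lambda>x. phi n x - v x) (\<lambda>x. phi n x - v x))" for n
  have pvN: "(\<lambda>x. phi n x - v x) \<in> DN b c m" for n by (rule DNdiff[OF CcDN'[OF phi] vN])
  have g0: "g n \<ge> 0" for n unfolding g_def by (rule NN_nonneg[OF pvN])
  have glim: "g \<longlonglongrightarrow> 0" using lim unfolding qnorm_def g_def[symmetric] sqrt_tendsto0_iff[OF g0] .
  have pkD: "(\<lambda>x. phi n x - phi k x) \<in> D" for n k by (rule CcD'[OF Cc_diff[OF phi phi]])
  have cauchy: "\<forall>e>0. \<exists>N. \<forall>n\<ge>N. \<forall>k\<ge>N. qnorm m Q (\<lambda>x. phi n x - phi k x) < e"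
    unfolding qnorm_def qip_def[symmetric]
  proof (rule cauchy_from[where g = g])
    fix n k
    show "0 \<le> Re (qip m Q (\<lambda>x. phi n x - phi k x) (\<lambda>x. phi n x - phi k x))"
      by (rule sq_pos[OF SQ pkD])
    have "(\<lambda>x. phi n x - phi k x) = (\<lambda>x. (phi n x - v x) - (phi k x - v x))" by simp
    then have "Re (qip m Q (\<lambda>x. phi n x - phi k x) (\<lambda>x. phi n x - phi k x))
       = Re (QN b c (\<lambda>x. (phi n x - v x) - (phi k x - v x)) (\<lambda>x. (phi n x - v x) - (phi k x - v x))
          + ip m (\<lambda>x. (phi n x - v x) - (phi k x - v x)) (\<lambda>x. (phi n x - v x) - (phi k x - v x)))"
      using NQ_Cc[OF Cc_diff[OF phi phi, of n k]] by simp
    also have "\<dots> \<le> 2 * g n + 2 * g k"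
      unfolding g_def by (rule NN_diff_le[OF pvN pvN])
    finally show "Re (qip m Q (\<lambda>x. phi n x - phi k x) (\<lambda>x. phi n x - phi k x)) \<le> 2 * g n + 2 * g k" .
  qed (rule glim)
  have "\<exists>w\<in>D. (\<lambda>n. qnorm m Q (\<lambda>x. phi n x - w x)) \<longlonglongrightarrow> 0"
    using clQ[unfolded closed_form_def, rule_format, of phi] cauchy CcD'[OF phi] by simp
  then obtain w where w: "w \<in> D" and wl: "(\<lambda>n. qnorm m Q (\<lambda>x. phi n x - w x)) \<longlonglongrightarrow> 0"
    by blast
  have pwD: "(\<lambda>x. phi n x - w x) \<in> D" for n by (rule sq_diff[OF SQ CcD'[OF phi] w])
  have wl2: "(\<lambda>n. Re (qip m Q (\<lambda>x. phi n x - w x) (\<lambda>x. phi n x - w x))) \<longlonglongrightarrow> 0"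
    using wl unfolding qnorm_def qip_def[symmetric] 
    by (rule sqrt_tendsto0_iff[of "\<lambda>n. Re (qip m Q (\<lambda>x. phi n x - w x) (\<lambda>x. phi n x - w x))", OF sq_pos[OF SQ pwD], THEN iffD1])
  have "w = v"
  proof
    fix x
    have "(\<lambda>n. phi n x - w x) \<longlonglongrightarrow> 0"
      by (rule pointwise_from[OF NQ_point[OF pwD] mp wl2])
    then have l1: "(\<lambda>n. phi n x) \<longlonglongrightarrow> w x" by (simp add: LIM_zero_iff)
    have "(\<lambda>n. phi n x - v x) \<longlonglongrightarrow> 0"
      by (rule pointwise_from[OF NN_point[OF pvN] mp glim[unfolded g_def]])
    then have l2: "(\<lambda>n. phi n x) \<longlonglongrightarrow> v x" by (simp add: LIM_zero_iff)
    show "w x = v x" using l1 l2 by (rule LIMSEQ_unique)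
  qed
  then show ?thesis using w wl2 phi by blast
qed




lemmas DQDD = DQD_D
lemmas CcDQD = Cc_DQD

lemma equiv:
  assumes u: "u \<in> D"
  shows "(\<forall>x. Ltilde b c m u x + u x = 0) \<longleftrightarrow> (\<forall>v\<in>DQD b c m. qip m Q u v = 0)"
proof
  assume H: "\<forall>v\<in>DQD b c m. qip m Q u v = 0"
  show "\<forall>x. Ltilde b c m u x + u x = 0"
  proof
    fix y
    have "qip m Q u (delta y) = 0" using H CcDQD[OF delta_Cc[of y]] by blast
    then have "(Ltilde b c m u y + u y) * complex_of_real (m y) = 0"
      by (simp only: qipd[OF u, of y])
    then show "Ltilde b c m u y + u y = 0" using mp[of y] by simp
  qed
next
  assume H: "\<forall>x. Ltilde b c m u x + u x = 0"
  have d0: "qip m Q (delta y) u = 0" for y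
  proof -
    have "qip m Q (delta y) u = cnj (qip m Q u (delta y))" by (rule sq_herm[OF SQ CcD'[OF delta_Cc] u])
    also have "qip m Q u (delta y) = (Ltilde b c m u y + u y) * complex_of_real (m y)" by (rule qipd[OF u])
    also have "Ltilde b c m u y + u y = 0" using H by blast
    finally show ?thesis by simp
  qed
  have cc: "qip m Q u phi = 0" if phi: "phi \<in> Cc" for phi
  proof -
    have fin: "finite {y. phi y \<noteq> 0}" using phi by (simp add: Cc_def)
    have "qip m Q phi u = qip m Q (\<lambda>x. \<Sum>y\<in>{y. phi y \<noteq> 0}. phi y * delta y x) u"
      by (subst Cc_expand[OF phi]) (rule refl)
    also have "\<dots> = (\<Sum>y\<in>{y. phi y \<noteq> 0}. phi y * qip m Q (delta y) u)"
    proof (rule lin_expand[where B = "\<lambda>w. qip m Q w u", OF CcD _ _ fin])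
      fix v w assume "v \<in> D" "w \<in> D"
      then show "qip m Q (\<lambda>x. v x + w x) u = qip m Q v u + qip m Q w u" by (rule sq_Fadd[OF SQ _ _ u])
    next
      fix a v assume "v \<in> D"
      then show "qip m Q (\<lambda>x. a * v x) u = a * qip m Q v u" by (rule sq_Fscale[OF SQ _ u])
    qed
    also have "\<dots> = 0" by (simp add: d0)
    finally show ?thesis using sq_herm[OF SQ u CcD'[OF phi]] by simp
  qed
  show "\<forall>v\<in>DQD b c m. qip m Q u v = 0"
  proof
    fix v assume v: "v \<in> DQD b c m"
    obtain phi where vD: "v \<in> D" and phi: "\<And>n. phi n \<in> Cc"
      and lim: "(\<lambda>n. Re (qip m Q (\<lambda>x. phi n x - v x) (\<lambda>x. phi n x - v x))) \<longlonglongrightarrow> 0"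
      using DQDD[OF v] by blast
    have pvD: "(\<lambda>x. phi n x - v x) \<in> D" for n by (rule sq_diff[OF SQ CcD'[OF phi] vD])
    have "(\<lambda>n. qip m Q u (\<lambda>x. phi n x - v x)) \<longlonglongrightarrow> 0"
      using sq_lim0[OF SQ u, of "\<lambda>n x. phi n x - v x"] pvD lim by blast
    moreover have "qip m Q u (\<lambda>x. phi n x - v x) = - qip m Q u v" for n
    proof -
      have "qip m Q u (\<lambda>x. phi n x - v x) = qip m Q u (phi n) - qip m Q u v"
        by (rule sq_Fdiff_r[OF SQ u CcD'[OF phi] vD])
      then show ?thesis using cc[OF phi[of n]] by simp
    qed
    ultimately have "(\<lambda>n. - qip m Q u v) \<longlonglongrightarrow> 0" by simp
    then have "- qip m Q u v = 0" by (rule LIMSEQ_unique[OF tendsto_const])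
    then show "qip m Q u v = 0" by simp
  qed
qed

lemma orth:
  assumes v: "v \<in> DQD b c m" and h: "h \<in> Hsp b c m D"
  shows "qip m Q v h = 0"
proof -
  have hD: "h \<in> D" and hL: "\<forall>x. Ltilde b c m h x + h x = 0" using h by (auto simp: Hsp_def)
  have vD: "v \<in> D" using DQDD[OF v] by blast
  have "qip m Q h v = 0" using equiv[OF hD] hL v by blast
  then show ?thesis using sq_herm[OF SQ vD hD] by simp
qed




lemmas NQpt = NQ_point

lemma decomp_w:
  assumes u: "u \<in> D"
  shows "\<exists>phi w. (\<forall>n. phi n \<in> Cc) \<and> w \<in> D
    \<and> (\<forall>n k. Re (qip m Q (\<lambda>x. phi n x - phi k x) (\<lambda>x. phi n x - phi k x)) \<le> 2 * inverse (real (Suc n)) + 2 * inverse (real (Suc k)))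
    \<and> (\<lambda>n. Re (qip m Q (\<lambda>x. phi n x - w x) (\<lambda>x. phi n x - w x))) \<longlonglongrightarrow> 0
    \<and> (\<forall>x. Ltilde b c m (\<lambda>x. u x - w x) x + (u x - w x) = 0)"
proof -
  define N where "N f = Re (qip m Q f f)" for f
  define A where "A = (\<lambda>phi. N (\<lambda>x. u x - phi x)) ` Cc"
  define d where "d = Inf A"
  have z: "(\<lambda>x. 0) \<in> Cc" by (simp add: Cc_def)
  have Ane: "A \<noteq> {}" using z unfolding A_def by blast
  have Nnn: "f \<in> D \<Longrightarrow> N f \<ge> 0" for f unfolding N_def by (rule sq_pos[OF SQ])
  have uphi: "phi \<in> Cc \<Longrightarrow> (\<lambda>x. u x - phi x) \<in> D" for phi by (rule sq_diff[OF SQ u CcD'])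
  have Abdd: "bdd_below A" unfolding A_def
    by (rule bdd_belowI[of _ 0]) (auto intro!: Nnn uphi)
  have low: "phi \<in> Cc \<Longrightarrow> d \<le> N (\<lambda>x. u x - phi x)" for phi
    unfolding d_def A_def by (rule cInf_lower[OF _ Abdd[unfolded A_def]]) blast
  have ex: "\<exists>phi. phi \<in> Cc \<and> N (\<lambda>x. u x - phi x) < d + inverse (real (Suc n))" for n
  proof -
    have "Inf A < d + inverse (real (Suc n))" unfolding d_def by simp
    from cInf_lessD[OF Ane this] show ?thesis unfolding A_def by blast
  qed
  have "\<forall>n. \<exists>phi. phi \<in> Cc \<and> N (\<lambda>x. u x - phi x) < d + inverse (real (Suc n))" using ex by blast
  from choice[OF this] obtain phi where
    phi: "\<And>n. phi n \<in> Cc" and phin: "\<And>n. N (\<lambda>x. u x - phi n x) < d + inverse (real (Suc n))"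
    by blast
  define h where "h n = (\<lambda>x. u x - phi n x)" for n
  have hD: "h n \<in> D" for n unfolding h_def by (rule uphi[OF phi])
  have pkD: "(\<lambda>x. phi n x - phi k x) \<in> D" for n k by (rule CcD'[OF Cc_diff[OF phi phi]])
  have dist: "N (\<lambda>x. phi n x - phi k x) \<le> 2 * inverse (real (Suc n)) + 2 * inverse (real (Suc k))" for n k
  proof -
    define psi where "psi = (\<lambda>x. (1/2) * (phi n x + phi k x))"
    have psi: "psi \<in> Cc" unfolding psi_def by (rule Cc_scale[OF Cc_add[OF phi phi]])
    have par: "N (\<lambda>x. h k x + h n x) + N (\<lambda>x. h k x - h n x) = 2 * N (h k) + 2 * N (h n)"
      unfolding N_def by (rule sq_par[OF SQ hD hD])
    have e1: "(\<lambda>x. h k x - h n x) = (\<lambda>x. phi n x - phi k x)" unfolding h_def by auto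
    have e2: "(\<lambda>x. h k x + h n x) = (\<lambda>x. 2 * (u x - psi x))" unfolding h_def psi_def
      by (auto simp: algebra_simps)
    have "N (\<lambda>x. 2 * (u x - psi x)) = (cmod 2)\<^sup>2 * N (\<lambda>x. u x - psi x)"
      unfolding N_def by (rule sq_Nscale[OF SQ uphi[OF psi]])
    then have e3: "N (\<lambda>x. h k x + h n x) = 4 * N (\<lambda>x. u x - psi x)" unfolding e2 by simp
    have "d \<le> N (\<lambda>x. u x - psi x)" by (rule low[OF psi])
    moreover have "N (h k) < d + inverse (real (Suc k))" "N (h n) < d + inverse (real (Suc n))"
      unfolding h_def by (rule phin)+
    ultimately show ?thesis using par unfolding e1 e3 by linarith
  qed
  have cauchy: "\<forall>e>0. \<exists>N. \<forall>n\<ge>N. \<forall>k\<ge>N. qnorm m Q (\<lambda>x. phi n x - phi k x) < e"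
    unfolding qnorm_def qip_def[symmetric]
    by (rule cauchy_from[where g = "\<lambda>n. inverse (real (Suc n))"])
       (use dist pkD Nnn LIMSEQ_inverse_real_of_nat in \<open>auto simp: N_def\<close>)
  have "\<exists>w\<in>D. (\<lambda>n. qnorm m Q (\<lambda>x. phi n x - w x)) \<longlonglongrightarrow> 0"
    using clQ[unfolded closed_form_def, rule_format, of phi] cauchy CcD'[OF phi] by simp
  then obtain w where w: "w \<in> D" and wl: "(\<lambda>n. qnorm m Q (\<lambda>x. phi n x - w x)) \<longlonglongrightarrow> 0"
    by blast
  have pwD: "(\<lambda>x. phi n x - w x) \<in> D" for n by (rule sq_diff[OF SQ CcD'[OF phi] w])
  have wl2: "(\<lambda>n. Re (qip m Q (\<lambda>x. phi n x - w x) (\<lambda>x. phi n x - w x))) \<longlonglongrightarrow> 0"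
    using wl unfolding qnorm_def qip_def[symmetric] 
    by (rule sqrt_tendsto0_iff[of "\<lambda>n. Re (qip m Q (\<lambda>x. phi n x - w x) (\<lambda>x. phi n x - w x))", OF sq_pos[OF SQ pwD], THEN iffD1])
  have Hsp: "Ltilde b c m (\<lambda>x. u x - w x) y + (u y - w y) = 0" for y
  proof -
    have dyD: "delta y \<in> D" by (rule CcD'[OF delta_Cc])
    have hhD: "(\<lambda>x. u x - w x) \<in> D" by (rule sq_diff[OF SQ u w])
    define a where "a n = qip m Q (h n) (delta y)" for n
    define a0 where "a0 = qip m Q (\<lambda>x. u x - w x) (delta y)"
    define B where "B = N (delta y)"
    have B0: "B \<ge> 0" unfolding B_def by (rule Nnn[OF dyD])
    have wpD: "(\<lambda>x. w x - phi n x) \<in> D" for n by (rule sq_diff[OF SQ w CcD'[OF phi]])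
    have swap: "Re (qip m Q (\<lambda>x. w x - phi n x) (\<lambda>x. w x - phi n x)) = Re (qip m Q (\<lambda>x. phi n x - w x) (\<lambda>x. phi n x - w x))" for n
    proof -
      have "(\<lambda>x. w x - phi n x) = (\<lambda>x. (-1) * (phi n x - w x))" by auto
      then show ?thesis using sq_Nscale[OF SQ pwD[of n], of "-1"] by simp
    qed
    have wl3: "(\<lambda>n. Re (qip m Q (\<lambda>x. w x - phi n x) (\<lambda>x. w x - phi n x))) \<longlonglongrightarrow> 0"
      unfolding swap by (rule wl2)
    have "(\<lambda>n. qip m Q (delta y) (\<lambda>x. w x - phi n x)) \<longlonglongrightarrow> 0"
      using sq_lim0[OF SQ dyD, of "\<lambda>n x. w x - phi n x"] wpD wl3 by blast
    then have "(\<lambda>n. cnj (qip m Q (delta y) (\<lambda>x. w x - phi n x))) \<longlonglongrightarrow> cnj 0"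
      by (rule tendsto_cnj)
    moreover have "cnj (qip m Q (delta y) (\<lambda>x. w x - phi n x)) = a n - a0" for n
    proof -
      have "(\<lambda>x. w x - phi n x) = (\<lambda>x. h n x - (u x - w x))" unfolding h_def by auto
      then have "qip m Q (\<lambda>x. w x - phi n x) (delta y) = a n - a0"
        unfolding a_def a0_def using sq_Fdiff[OF SQ hD hhD dyD] by simp
      then show ?thesis using sq_herm[OF SQ wpD dyD] by simp
    qed
    ultimately have "(\<lambda>n. a n - a0) \<longlonglongrightarrow> 0" by simp
    then have alim: "a \<longlonglongrightarrow> a0" by (simp add: LIM_zero_iff)
    have ineq: "0 \<le> 2 * Re (cnj t * a n) + (cmod t)\<^sup>2 * B + inverse (real (Suc n))" for t n
    proof -
      have ps: "(\<lambda>x. phi n x - t * delta y x) \<in> Cc" by (rule Cc_diff[OF phi Cc_scale[OF delta_Cc]])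
      have "(\<lambda>x. u x - (phi n x - t * delta y x)) = (\<lambda>x. h n x + t * delta y x)" unfolding h_def by auto
      then have "d \<le> N (\<lambda>x. h n x + t * delta y x)" using low[OF ps] by simp
      also have "N (\<lambda>x. h n x + t * delta y x) = N (h n) + 2 * Re (cnj t * a n) + (cmod t)\<^sup>2 * B"
        unfolding N_def a_def B_def by (rule sq_expand[OF SQ hD dyD])
      finally show ?thesis using phin[of n] unfolding h_def by linarith
    qed
    have lim0: "0 \<le> 2 * Re (cnj t * a0) + (cmod t)\<^sup>2 * B" for t
    proof -
      have "(\<lambda>n. 2 * Re (cnj t * a n) + (cmod t)\<^sup>2 * B + inverse (real (Suc n))) \<longlonglongrightarrow> 2 * Re (cnj t * a0) + (cmod t)\<^sup>2 * B + 0"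
        by (intro tendsto_add tendsto_mult tendsto_const tendsto_Re tendsto_cnj alim LIMSEQ_inverse_real_of_nat)
      then show ?thesis using ineq[of t] by (intro LIMSEQ_le_const[of _ _ 0]) auto
    qed
    define s where "s = 1 / (B + 1)"
    have s0: "s > 0" using B0 unfolding s_def by simp
    have sB: "s * B < 1" using B0 unfolding s_def by (simp add: field_simps)
    define X where "X = (cmod a0)\<^sup>2"
    define t where "t = - (complex_of_real s * a0)"
    have "cnj t * a0 = - complex_of_real (s * X)"
      unfolding t_def X_def by (simp add: complex_norm_square[symmetric] mult.assoc mult.commute[of _ a0])
    moreover have "(cmod t)\<^sup>2 = s\<^sup>2 * X"
      unfolding t_def X_def by (simp add: norm_mult power_mult_distrib)
    ultimately have "0 \<le> - 2 * s * X + s\<^sup>2 * X * B" using lim0[of t] by simp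
    then have "0 \<le> s * (X * (s * B - 2))" by (simp add: algebra_simps power2_eq_square)
    then have "0 \<le> X * (s * B - 2)" using s0 by (simp add: zero_le_mult_iff)
    moreover have "X \<ge> 0" unfolding X_def by simp
    ultimately have "X = 0" using sB by (smt (verit) mult_pos_neg)
    then have "a0 = 0" unfolding X_def by simp
    then have "(Ltilde b c m (\<lambda>x. u x - w x) y + (u y - w y)) * complex_of_real (m y) = 0"
      unfolding a0_def qipd[OF hhD] by simp
    then show ?thesis using mp[of y] by simp
  qed
  show ?thesis
    using phi w dist wl2 Hsp unfolding N_def by blast
qed


lemmas NNnn = NN_nonneg
lemmas NQCc = NQ_Cc

lemma decomp:
  assumes u: "u \<in> D"
  shows "\<exists>v\<in>DQD b c m. \<exists>h\<in>Hsp b c m D. u = (\<lambda>x. v x + h x)"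
proof -
  obtain phi w where phi: "\<And>n. phi n \<in> Cc" and w: "w \<in> D"
    and dist: "\<And>n k. Re (qip m Q (\<lambda>x. phi n x - phi k x) (\<lambda>x. phi n x - phi k x)) \<le> 2 * inverse (real (Suc n)) + 2 * inverse (real (Suc k))"
    and wl2: "(\<lambda>n. Re (qip m Q (\<lambda>x. phi n x - w x) (\<lambda>x. phi n x - w x))) \<longlonglongrightarrow> 0"
    and L: "\<forall>x. Ltilde b c m (\<lambda>x. u x - w x) x + (u x - w x) = 0"
    using decomp_w[OF u] by blast
  define NN where "NN f = Re (QN b c f f + ip m f f)" for f
  have pwD: "(\<lambda>x. phi n x - w x) \<in> D" for n by (rule sq_diff[OF SQ CcD'[OF phi] w])
  have pt: "(\<lambda>n. phi n x) \<longlonglongrightarrow> w x" for x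
  proof -
    have "(\<lambda>n. phi n x - w x) \<longlonglongrightarrow> 0" by (rule pointwise_from[OF NQpt[OF pwD] mp wl2])
    then show ?thesis by (simp add: LIM_zero_iff)
  qed
  have pkDN: "(\<lambda>x. phi n x - phi k x) \<in> DN b c m" for n k by (rule CcDN'[OF Cc_diff[OF phi phi]])
  have Pn: "(\<lambda>x. phi n x - w x) \<in> DN b c m \<and> NN (\<lambda>x. phi n x - w x) \<le> 12 * inverse (real (Suc n))" for n
  proof -
    define e where "e = inverse (real (Suc n))"
    have bnd: "EE (case_prod b) (dif (\<lambda>x. phi n x - phi k x)) \<le> 8 * e \<and> EE c (\<lambda>x. phi n x - phi k x) \<le> 4 * e
       \<and> EE m (\<lambda>x. phi n x - phi k x) \<le> 4 * e" if k: "k \<ge> n" for k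
    proof -
      have ik: "inverse (real (Suc k)) \<le> e" unfolding e_def using k by (simp add: field_simps)
      have eq: "NN (\<lambda>x. phi n x - phi k x) = Re (qip m Q (\<lambda>x. phi n x - phi k x) (\<lambda>x. phi n x - phi k x))"
        using NQCc[OF Cc_diff[OF phi phi, of n k]] unfolding NN_def by simp
      have "NN (\<lambda>x. phi n x - phi k x) \<le> 4 * e"
        using dist[of n k] ik unfolding eq e_def by linarith
      moreover have "EE (case_prod b) (dif (\<lambda>x. phi n x - phi k x)) \<ge> 0" by (rule EE_nonneg) (rule bbn)
      moreover have "EE c (\<lambda>x. phi n x - phi k x) \<ge> 0" by (rule EE_nonneg) (rule cn)
      moreover have "EE m (\<lambda>x. phi n x - phi k x) \<ge> 0" by (rule EE_nonneg) (rule mn)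
      ultimately show ?thesis unfolding NN_def NQN[OF pkDN] by linarith
    qed
    have ws_k: "(\<lambda>x. phi n x - phi k x) \<in> ws m \<and> dif (\<lambda>x. phi n x - phi k x) \<in> ws (case_prod b) \<and> (\<lambda>x. phi n x - phi k x) \<in> ws c" for k
      using pkDN[of n k] unfolding DNiff .
    have lim1: "(\<lambda>k. phi n x - phi k x) \<longlonglongrightarrow> phi n x - w x" for x
      by (intro tendsto_diff tendsto_const pt)
    have lim2: "(\<lambda>k. dif (\<lambda>x. phi n x - phi k x) i) \<longlonglongrightarrow> dif (\<lambda>x. phi n x - w x) i" for i
      unfolding dif_def case_prod_unfold by (intro tendsto_diff tendsto_const pt)
    have fm: "(\<lambda>x. phi n x - w x) \<in> ws m \<and> EE m (\<lambda>x. phi n x - w x) \<le> 4 * e"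
      by (rule EE_fatou[of m, OF mn lim1, of n]) (use bnd ws_k in blast)
    have fc: "(\<lambda>x. phi n x - w x) \<in> ws c \<and> EE c (\<lambda>x. phi n x - w x) \<le> 4 * e"
      by (rule EE_fatou[of c, OF cn lim1, of n]) (use bnd ws_k in blast)
    have fb: "dif (\<lambda>x. phi n x - w x) \<in> ws (case_prod b) \<and> EE (case_prod b) (dif (\<lambda>x. phi n x - w x)) \<le> 8 * e"
      by (rule EE_fatou[of "case_prod b", OF bbn lim2, of n]) (use bnd ws_k in blast)
    have PDN: "(\<lambda>x. phi n x - w x) \<in> DN b c m" unfolding DNiff using fm fc fb by blast
    show ?thesis using PDN fm fc fb unfolding NN_def NQN[OF PDN] e_def by simp
  qed
  have wDN: "w \<in> DN b c m"
  proof -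
    have "(\<lambda>x. phi 0 x - (phi 0 x - w x)) \<in> DN b c m" by (rule DNdiff[OF CcDN'[OF phi] Pn[THEN conjunct1]])
    then show ?thesis by simp
  qed
  have "(\<lambda>n. NN (\<lambda>x. phi n x - w x)) \<longlonglongrightarrow> 0"
  proof (rule Lim_null_comparison)
    show "\<forall>\<^sub>F n in sequentially. norm (NN (\<lambda>x. phi n x - w x)) \<le> 12 * inverse (real (Suc n))"
      using Pn NNnn unfolding NN_def by (auto intro!: always_eventually)
    show "(\<lambda>n. 12 * inverse (real (Suc n))) \<longlonglongrightarrow> 0"
      using tendsto_mult_right_zero[OF LIMSEQ_inverse_real_of_nat, of 12] by simp
  qed
  then have "(\<lambda>n. qnorm m (QN b c) (\<lambda>x. phi n x - w x)) \<longlonglongrightarrow> 0"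
    unfolding qnorm_def NN_def[symmetric]
    using sqrt_tendsto0_iff[of "\<lambda>n. NN (\<lambda>x. phi n x - w x)"] NNnn Pn unfolding NN_def by blast
  then have wQ: "w \<in> DQD b c m" unfolding DQD_def using wDN phi by blast
  have hH: "(\<lambda>x. u x - w x) \<in> Hsp b c m D" unfolding Hsp_def using sq_diff[OF SQ u w] L by blast
  show ?thesis
  proof (rule bexI[OF _ wQ], rule bexI[OF _ hH])
    show "u = (\<lambda>x. w x + (u x - w x))" by simp
  qed
qed

end

theorem mainTheorem3:
  fixes m :: "'v::countable \<Rightarrow> real"
    and b :: "'v \<Rightarrow> 'v \<Rightarrow> real" and c :: "'v \<Rightarrow> real"
    and D :: "('v \<Rightarrow> complex) set"
    and Q :: "('v \<Rightarrow> complex) \<Rightarrow> ('v \<Rightarrow> complex) \<Rightarrow> complex"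
  assumes "\<forall>x. m x > 0"
    and "is_graph b c"
    and "condC b c m D Q"
  shows "D \<subseteq> Ftilde b
     \<and> (\<forall>u\<in>D. (\<forall>x. Ltilde b c m u x + u x = 0) \<longleftrightarrow> (\<forall>v\<in>DQD b c m. qip m Q u v = 0))
     \<and> DQD b c m \<subseteq> D \<and> Hsp b c m D \<subseteq> D
     \<and> (\<forall>v\<in>DQD b c m. \<forall>h\<in>Hsp b c m D. qip m Q v h = 0)
     \<and> (\<forall>u\<in>D. \<exists>v\<in>DQD b c m. \<exists>h\<in>Hsp b c m D. u = (\<lambda>x. v x + h x))"
proof (intro conjI ballI subsetI)
  show "u \<in> D \<Longrightarrow> u \<in> Ftilde b" for u using D_Ftilde[OF assms] by blast
  show "u \<in> D \<Longrightarrow> (\<forall>x. Ltilde b c m u x + u x = 0) \<longleftrightarrow> (\<forall>v\<in>DQD b c m. qip m Q u v = 0)" for u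
    by (rule equiv[OF assms])
  show "v \<in> DQD b c m \<Longrightarrow> v \<in> D" for v using DQD_D[OF assms] by blast
  show "h \<in> Hsp b c m D \<Longrightarrow> h \<in> D" for h by (simp add: Hsp_def)
  show "v \<in> DQD b c m \<Longrightarrow> h \<in> Hsp b c m D \<Longrightarrow> qip m Q v h = 0" for v h
    by (rule orth[OF assms])
  show "u \<in> D \<Longrightarrow> \<exists>v\<in>DQD b c m. \<exists>h\<in>Hsp b c m D. u = (\<lambda>x. v x + h x)" for u
    by (rule decomp[OF assms])
qed

end
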